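(* Let $n>k\ge1$ and $0\le r\le k$. The number of pairs $(A,B)\in M_k(\mathbb{F}_q)\times M_{k,n-k}(\mathbb{F}_q)$ with $\operatorname{rank}\mathcal{C}(A,B)=r$ (i.e. with $r$-dimensional reachability subspace) is $${k\brack r}_q\, q^{(k-r)^2}\prod_{i=k-r+1}^{k}(q^n-q^i).$$ In particular, the number of reachable pairs (those with $\operatorname{rank}\mathcal{C}(A,B)=k$) is $\prod_{i=1}^{k}(q^n-q^i)$.
   Context: $\mathbb{F}_q$ is the finite field with $q$ elements. For $(A,B)\in M_k(\mathbb{F}_q)\times M_{k,n-k}(\mathbb{F}_q)$, the reachability matrix is $\mathcal{C}(A,B)=[\,B\ \ AB\ \ \cdots\ \ A^{k-1}B\,]$. ${k\brack r}_q=\prod_{i=0}^{r-1}\frac{q^{k-i}-1}{q^{i+1}-1}$ denotes the $q$-binomial coefficient (the number of $r$-dimensional subspaces of $\mathbb{F}_q^k$). Empty products equal $1$. *)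

theory Defs
  imports "Jordan_Normal_Form.DL_Rank"
begin

definition reach_mat :: "'a::field mat \<Rightarrow> 'a mat \<Rightarrow> 'a mat" where
  "reach_mat A B = mat_of_cols (dim_row A)
     (concat (map (\<lambda>j. cols (A ^\<^sub>m j * B)) [0..<dim_row A]))"

definition qbinom :: "nat \<Rightarrow> nat \<Rightarrow> nat \<Rightarrow> rat" where
  "qbinom q k r = (\<Prod>i<r. (of_nat q ^ (k - i) - 1) / (of_nat q ^ (i + 1) - 1))"

end

theory Submission
  imports Defs
begin


lemma card_carrier_vec': "card (carrier_vec n :: 'a::finite vec set) = card (UNIV::'a set) ^ n"
proof -
  have "bij_betw (\<lambda>v. restrict (\<lambda>i. v $ i) {..<n}) (carrier_vec n :: 'a vec set) (PiE {..<n} (\<lambda>_. UNIV))"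
  proof (rule bij_betwI[where g = "\<lambda>f. vec n f"])
    show "(\<lambda>v. restrict (($) v) {..<n}) \<in> carrier_vec n \<rightarrow> {..<n} \<rightarrow>\<^sub>E UNIV" by auto
    show "vec n \<in> ({..<n} \<rightarrow>\<^sub>E UNIV) \<rightarrow> (carrier_vec n :: 'a vec set)" by auto
    show "vec n (restrict (($) x) {..<n}) = x" if "x \<in> carrier_vec n" for x :: "'a vec"
      using that by (intro eq_vecI) auto
    show "restrict (($) (vec n y :: 'a vec)) {..<n} = y" if "y \<in> {..<n} \<rightarrow>\<^sub>E UNIV" for y
      using that by (auto simp: restrict_def PiE_def extensional_def fun_eq_iff)
  qed
  hence "card (carrier_vec n :: 'a vec set) = card (PiE {..<n} (\<lambda>_. (UNIV :: 'a set)))"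
    by (rule bij_betw_same_card)
  also have "\<dots> = card (UNIV::'a set) ^ n" by (simp add: card_PiE)
  finally show ?thesis .
qed

lemma finite_carrier_vec'[simp]: "finite (carrier_vec n :: 'a::finite vec set)"
  by (rule card_ge_0_finite) (simp add: card_carrier_vec' finite_UNIV_card_ge_0)

lemma card_carrier_mat': "card (carrier_mat a b :: 'a::finite mat set) = card (UNIV::'a set) ^ (a * b)"
proof -
  let ?S = "{..<a} \<times> {..<b}"
  have "bij_betw (\<lambda>M. restrict (\<lambda>ij. M $$ ij) ?S) (carrier_mat a b :: 'a mat set) (PiE ?S (\<lambda>_. UNIV))"
  proof (rule bij_betwI[where g = "\<lambda>f. mat a b f"])
    show "(\<lambda>M. restrict (($$) M) ?S) \<in> carrier_mat a b \<rightarrow> ?S \<rightarrow>\<^sub>E UNIV" by auto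
    show "mat a b \<in> (?S \<rightarrow>\<^sub>E UNIV) \<rightarrow> (carrier_mat a b :: 'a mat set)" by auto
    show "mat a b (restrict (($$) x) ?S) = x" if "x \<in> carrier_mat a b" for x :: "'a mat"
      using that by (intro eq_matI) auto
    show "restrict (($$) (mat a b y :: 'a mat)) ?S = y" if "y \<in> ?S \<rightarrow>\<^sub>E UNIV" for y
      using that by (auto simp: restrict_def PiE_def extensional_def fun_eq_iff)
  qed
  hence "card (carrier_mat a b :: 'a mat set) = card (PiE ?S (\<lambda>_. (UNIV :: 'a set)))"
    by (rule bij_betw_same_card)
  also have "\<dots> = card (UNIV::'a set) ^ (a * b)" by (simp add: card_PiE card_cartesian_product)
  finally show ?thesis .
qed

lemma finite_carrier_mat'[simp]: "finite (carrier_mat a b :: 'a::finite mat set)"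
  by (rule card_ge_0_finite) (simp add: card_carrier_mat' finite_UNIV_card_ge_0)


definition subsp :: "nat \<Rightarrow> 'a::field vec set \<Rightarrow> bool" where
  "subsp k V \<longleftrightarrow> V \<subseteq> carrier_vec k \<and> 0\<^sub>v k \<in> V \<and> (\<forall>x\<in>V. \<forall>y\<in>V. x + y \<in> V) \<and> (\<forall>c. \<forall>x\<in>V. c \<cdot>\<^sub>v x \<in> V)"

definition SPAN :: "nat \<Rightarrow> 'a::field vec set \<Rightarrow> 'a vec set" where
  "SPAN k S = \<Inter>{V. subsp k V \<and> S \<subseteq> V}"

definition colsp :: "'a::field mat \<Rightarrow> 'a vec set" where
  "colsp M = (\<lambda>x. M *\<^sub>v x) ` carrier_vec (dim_col M)"

lemma subsp_carrier: "subsp k (carrier_vec k)" by (auto simp: subsp_def)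

lemma subspD: assumes "subsp k V"
  shows "V \<subseteq> carrier_vec k" "0\<^sub>v k \<in> V" "x \<in> V \<Longrightarrow> y \<in> V \<Longrightarrow> x + y \<in> V" "x \<in> V \<Longrightarrow> c \<cdot>\<^sub>v x \<in> V"
  using assms by (auto simp: subsp_def)

lemma subsp_uminus: assumes "subsp k V" "x \<in> V" shows "- x \<in> V"
proof -
  have "x \<in> carrier_vec k" using assms subspD(1) by blast
  hence "- x = (-1) \<cdot>\<^sub>v x" by (intro eq_vecI) auto
  thus ?thesis using subspD(4)[OF assms] by simp
qed

lemma subsp_diff: assumes "subsp k V" "x \<in> V" "y \<in> V" shows "x - y \<in> V"
proof -
  have "x \<in> carrier_vec k" "y \<in> carrier_vec k" using assms subspD(1) by blast+
  hence "x - y = x + (- y)" by (intro eq_vecI) auto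
  thus ?thesis using subspD(3)[OF assms(1,2) subsp_uminus[OF assms(1,3)]] by simp
qed

lemma SPAN_subsp: "S \<subseteq> carrier_vec k \<Longrightarrow> subsp k (SPAN k S)"
  unfolding SPAN_def subsp_def using subsp_carrier[of k]
  by (auto simp: subsp_def)

lemma SPAN_sup: "S \<subseteq> SPAN k S" unfolding SPAN_def by auto

lemma SPAN_least: "subsp k V \<Longrightarrow> S \<subseteq> V \<Longrightarrow> SPAN k S \<subseteq> V" unfolding SPAN_def by auto

lemma SPAN_carrier: "S \<subseteq> carrier_vec k \<Longrightarrow> SPAN k S \<subseteq> carrier_vec k"
  using SPAN_least[OF subsp_carrier] .

lemma SPAN_mono: "S \<subseteq> T \<Longrightarrow> T \<subseteq> carrier_vec k \<Longrightarrow> SPAN k S \<subseteq> SPAN k T"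
  by (meson SPAN_least SPAN_subsp SPAN_sup order_trans)

lemma SPAN_eqI: "subsp k V \<Longrightarrow> S \<subseteq> V \<Longrightarrow> (\<And>W. subsp k W \<Longrightarrow> S \<subseteq> W \<Longrightarrow> V \<subseteq> W) \<Longrightarrow> SPAN k S = V"
  by (meson SPAN_least SPAN_subsp SPAN_sup subset_antisym subspD(1) order_trans)

lemma SPAN_insert: assumes v: "v \<in> carrier_vec k" and S: "S \<subseteq> carrier_vec k"
  shows "SPAN k (insert v S) = {c \<cdot>\<^sub>v v + w | c w. w \<in> SPAN k S}" (is "_ = ?R")
proof (rule SPAN_eqI)
  have SS: "subsp k (SPAN k S)" using SPAN_subsp[OF S] .
  have Sc: "SPAN k S \<subseteq> carrier_vec k" using subspD(1)[OF SS] .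
  show "subsp k ?R" unfolding subsp_def
  proof (intro conjI ballI allI)
    show "?R \<subseteq> carrier_vec k" using Sc v by auto
    show "0\<^sub>v k \<in> ?R"
    proof -
      have "0\<^sub>v k = 0 \<cdot>\<^sub>v v + 0\<^sub>v k" using v by (intro eq_vecI) auto
      thus ?thesis using subspD(2)[OF SS] by blast
    qed
    fix x y assume "x \<in> ?R" "y \<in> ?R"
    then obtain c w c' w' where x: "x = c \<cdot>\<^sub>v v + w" "w \<in> SPAN k S" and y: "y = c' \<cdot>\<^sub>v v + w'" "w' \<in> SPAN k S" by blast
    have wc: "w \<in> carrier_vec k" "w' \<in> carrier_vec k" using x y Sc by auto
    have "x + y = (c + c') \<cdot>\<^sub>v v + (w + w')" using x y v wc
      by (intro eq_vecI) (auto simp: algebra_simps)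
    thus "x + y \<in> ?R" using subspD(3)[OF SS x(2) y(2)] by blast
  next
    fix d x assume "x \<in> ?R"
    then obtain c w where x: "x = c \<cdot>\<^sub>v v + w" "w \<in> SPAN k S" by blast
    have wc: "w \<in> carrier_vec k" using x Sc by auto
    have "d \<cdot>\<^sub>v x = (d * c) \<cdot>\<^sub>v v + d \<cdot>\<^sub>v w" using x v wc
      by (intro eq_vecI) (auto simp: algebra_simps)
    thus "d \<cdot>\<^sub>v x \<in> ?R" using subspD(4)[OF SS x(2)] by blast
  qed
  show "insert v S \<subseteq> ?R"
  proof
    fix x assume "x \<in> insert v S"
    then show "x \<in> ?R"
    proof
      assume "x = v"
      hence "x = 1 \<cdot>\<^sub>v v + 0\<^sub>v k" using v by (intro eq_vecI) auto
      thus ?thesis using subspD(2)[OF SS] by blast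
    next
      assume "x \<in> S"
      hence "x = 0 \<cdot>\<^sub>v v + x" using v S by (intro eq_vecI) auto
      thus ?thesis using \<open>x \<in> S\<close> SPAN_sup by blast
    qed
  qed
  fix W assume W: "subsp k W" "insert v S \<subseteq> W"
  have "SPAN k S \<subseteq> W" using SPAN_least[OF W(1)] W(2) by auto
  thus "?R \<subseteq> W" using W subspD[OF W(1)] by auto
qed

lemma SPAN_insert_mem: assumes "v \<in> SPAN k S" "S \<subseteq> carrier_vec k"
  shows "SPAN k (insert v S) = SPAN k S"
proof -
  have vc: "v \<in> carrier_vec k" using assms SPAN_carrier by blast
  have "insert v S \<subseteq> SPAN k S" using assms SPAN_sup by blast
  hence "SPAN k (insert v S) \<subseteq> SPAN k S" by (rule SPAN_least[OF SPAN_subsp[OF assms(2)]])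
  moreover have "SPAN k S \<subseteq> SPAN k (insert v S)" by (rule SPAN_mono) (use vc assms in auto)
  ultimately show ?thesis by blast
qed

lemma card_SPAN_insert: fixes v :: "'a::{finite,field} vec" assumes v: "v \<in> carrier_vec k" and S: "S \<subseteq> carrier_vec k" and nv: "v \<notin> SPAN k S"
  shows "card (SPAN k (insert v S)) = card (UNIV :: 'a set) * card (SPAN k S)"
proof -
  have SS: "subsp k (SPAN k S)" using SPAN_subsp[OF S] .
  have Sc: "SPAN k S \<subseteq> carrier_vec k" using subspD(1)[OF SS] .
  have eq: "SPAN k (insert v S) = (\<lambda>(c,w). c \<cdot>\<^sub>v v + w) ` (UNIV \<times> SPAN k S)"
    unfolding SPAN_insert[OF v S] by auto
  have inj: "inj_on (\<lambda>(c,w). c \<cdot>\<^sub>v v + w) (UNIV \<times> SPAN k S)"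
  proof (rule inj_onI, clarsimp)
    fix c w c' w' assume w: "w \<in> SPAN k S" and w': "w' \<in> SPAN k S" and e: "c \<cdot>\<^sub>v v + w = c' \<cdot>\<^sub>v v + w'"
    have wc: "w \<in> carrier_vec k" "w' \<in> carrier_vec k" using w w' Sc by auto
    have ei: "c * v $ i + w $ i = c' * v $ i + w' $ i" if "i < k" for i
      using arg_cong[OF e, of "\<lambda>x. x $ i"] that v wc by auto
    show "c = c' \<and> w = w'"
    proof (cases "c = c'")
      case True
      thus ?thesis using ei wc by (auto intro!: eq_vecI)
    next
      case False
      have "v = inverse (c - c') \<cdot>\<^sub>v (w' - w)"
      proof (rule eq_vecI)
        fix i assume "i < dim_vec (inverse (c - c') \<cdot>\<^sub>v (w' - w))"
        hence i: "i < k" using wc by auto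
        from ei[OF i] have "(c - c') * v $ i = w' $ i - w $ i" by (simp add: algebra_simps)
        thus "v $ i = (inverse (c - c') \<cdot>\<^sub>v (w' - w)) $ i" using i wc False
          by (auto simp: field_simps)
      qed (use v wc in auto)
      moreover have "inverse (c - c') \<cdot>\<^sub>v (w' - w) \<in> SPAN k S"
        using subspD(4)[OF SS subsp_diff[OF SS w' w]] .
      ultimately show ?thesis using nv by simp
    qed
  qed
  have "card (SPAN k (insert v S)) = card ((UNIV :: 'a set) \<times> SPAN k S)"
    using card_image[OF inj] by (simp add: eq)
  thus ?thesis by (simp add: card_cartesian_product)
qed

lemma mult_mat_vec_sum: assumes "M \<in> carrier_mat k n" "x \<in> carrier_vec n" "i < k"
  shows "(M *\<^sub>v x) $ i = (\<Sum>j<n. M $$ (i,j) * x $ j)"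
  using assms by (auto simp: scalar_prod_def lessThan_atLeast0 intro!: sum.cong)

lemma colsp_carrier: "M \<in> carrier_mat k n \<Longrightarrow> colsp M \<subseteq> carrier_vec k"
  unfolding colsp_def by auto

lemma colsp_subsp: assumes M: "M \<in> carrier_mat k n" shows "subsp k (colsp M)"
  unfolding subsp_def
proof (intro conjI ballI allI)
  show "colsp M \<subseteq> carrier_vec k" using colsp_carrier[OF M] .
  have "M *\<^sub>v 0\<^sub>v n = 0\<^sub>v k" using M by (intro eq_vecI) (auto simp: scalar_prod_def)
  moreover have "M *\<^sub>v 0\<^sub>v n \<in> (\<lambda>x. M *\<^sub>v x) ` carrier_vec n" by (rule imageI) simp
  ultimately show "0\<^sub>v k \<in> colsp M" unfolding colsp_def using M by simp
  fix x y assume "x \<in> colsp M" "y \<in> colsp M"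
  then obtain a b where "a \<in> carrier_vec n" "b \<in> carrier_vec n" "x = M *\<^sub>v a" "y = M *\<^sub>v b"
    unfolding colsp_def using M by auto
  thus "x + y \<in> colsp M" unfolding colsp_def using M
    by (auto simp: mult_add_distrib_mat_vec[symmetric] intro!: image_eqI)
next
  fix c x assume "x \<in> colsp M"
  then obtain a where "a \<in> carrier_vec n" "x = M *\<^sub>v a"
    unfolding colsp_def using M by auto
  thus "c \<cdot>\<^sub>v x \<in> colsp M" unfolding colsp_def using M
    by (auto simp: mult_mat_vec[symmetric] intro!: image_eqI)
qed

lemma col_in_colsp: assumes M: "M \<in> carrier_mat k n" and i: "i < n" shows "col M i \<in> colsp M"
proof -
  have "M *\<^sub>v unit_vec n i = col M i"
    using M i by (intro eq_vecI) (auto simp: scalar_prod_def unit_vec_def sum.delta' lessThan_atLeast0[symmetric]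
        if_distrib cong: if_cong)
  moreover have "M *\<^sub>v unit_vec n i \<in> (\<lambda>x. M *\<^sub>v x) ` carrier_vec n" by (rule imageI) simp
  ultimately show ?thesis unfolding colsp_def using M by simp
qed

lemma colsp_least: assumes M: "M \<in> carrier_mat k n" and V: "subsp k V" and cols: "\<And>i. i < n \<Longrightarrow> col M i \<in> V"
  shows "colsp M \<subseteq> V"
proof
  fix y assume "y \<in> colsp M"
  then obtain x where x: "x \<in> carrier_vec n" and y: "y = M *\<^sub>v x" unfolding colsp_def using M by auto
  define tr where "tr t = vec n (\<lambda>i. if i < t then x $ i else 0)" for t
  have "M *\<^sub>v tr t \<in> V" if "t \<le> n" for t
    using that
  proof (induction t)
    case 0
    have "M *\<^sub>v tr 0 = 0\<^sub>v k" using M by (intro eq_vecI) (auto simp: tr_def scalar_prod_def)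
    then show ?case using subspD(2)[OF V] by simp
  next
    case (Suc t)
    have "M *\<^sub>v tr (Suc t) = M *\<^sub>v tr t + x $ t \<cdot>\<^sub>v col M t"
    proof (rule eq_vecI)
      fix i assume "i < dim_vec (M *\<^sub>v tr t + x $ t \<cdot>\<^sub>v col M t)"
      hence i: "i < k" using M by auto
      have tc: "tr s \<in> carrier_vec n" for s unfolding tr_def by auto
      have "(M *\<^sub>v tr (Suc t)) $ i = (\<Sum>j<n. M $$ (i,j) * (if j < t then x $ j else 0) + (if j = t then M $$ (i,j) * x $ j else 0))"
        unfolding mult_mat_vec_sum[OF M tc i] by (intro sum.cong) (auto simp: tr_def)
      also have "\<dots> = (\<Sum>j<n. M $$ (i,j) * (if j < t then x $ j else 0)) + M $$ (i,t) * x $ t"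
        using Suc.prems by (simp add: sum.distrib sum.delta')
      also have "\<dots> = (M *\<^sub>v tr t) $ i + x $ t * M $$ (i,t)"
        unfolding mult_mat_vec_sum[OF M tc i] by (simp add: tr_def)
      also have "\<dots> = (M *\<^sub>v tr t + x $ t \<cdot>\<^sub>v col M t) $ i"
        using M i Suc.prems by (simp add: tr_def)
      finally show "(M *\<^sub>v tr (Suc t)) $ i = (M *\<^sub>v tr t + x $ t \<cdot>\<^sub>v col M t) $ i" .
    qed (use M in auto)
    thus ?case using Suc subspD(3,4)[OF V] cols by auto
  qed
  moreover have "tr n = x" using x by (intro eq_vecI) (auto simp: tr_def)
  ultimately show "y \<in> V" using y by auto
qed

lemma colsp_SPAN: assumes M: "M \<in> carrier_mat k n" shows "colsp M = SPAN k (set (cols M))"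
proof (rule SPAN_eqI[symmetric])
  show "subsp k (colsp M)" using colsp_subsp[OF M] .
  show "set (cols M) \<subseteq> colsp M" using M col_in_colsp[OF M] by (auto simp: cols_def)
  fix W assume "subsp k W" "set (cols M) \<subseteq> W"
  thus "colsp M \<subseteq> W" using M by (intro colsp_least[OF M]) (auto simp: cols_def)
qed


lemma colsp_col_space: assumes M: "M \<in> carrier_mat k n"
  shows "colsp M = vec_space.col_space k M"
  unfolding vec_space.col_space_eq[OF M] colsp_def using M by auto

lemma card_colsp_rank: fixes M :: "'a::{finite,field} mat" assumes M: "M \<in> carrier_mat k n"
  shows "card (colsp M) = card (UNIV::'a set) ^ vec_space.rank k M"
proof -
  interpret V: vec_space "TYPE('a)" k .
  obtain S where max: "maximal S (\<lambda>T. T \<subseteq> set (cols M) \<and> \<not> V.lin_dep T)"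
    using maximal_exists[of "(\<lambda>T. T \<subseteq> set (cols M) \<and> \<not> V.lin_dep T)" "card (set (cols M))" "{}"]
    by (meson List.finite_set card_mono empty_iff empty_subsetI V.finite_lin_indpt2 rev_finite_subset)
  have rk: "V.rank M = card S" by (rule V.rank_card_indpt[OF M max])
  have SM: "S \<subseteq> set (cols M)" and li: "\<not> V.lin_dep S" using max unfolding maximal_def by auto
  have colsc: "set (cols M) \<subseteq> carrier_vec k" using M cols_dim by blast
  have Sc: "S \<subseteq> carrier_vec k" using SM colsc by auto
  have finS: "finite S" using SM finite_subset by blast
  obtain ds where ds: "set ds = S" "distinct ds" using finite_distinct_list[OF finS] by blast
  define P where "P = mat_of_cols k ds"
  have Pc: "P \<in> carrier_mat k (length ds)" unfolding P_def by auto
  have colsP: "cols P = ds" unfolding P_def using ds Sc by (intro cols_mat_of_cols) auto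
  have "V.span (set (cols M)) \<subseteq> V.span S"
  proof (rule V.span_subsetI[OF Sc], rule subsetI)
    fix c assume c: "c \<in> set (cols M)"
    show "c \<in> V.span S"
    proof (cases "c \<in> S")
      case True thus ?thesis using V.in_own_span[of S] Sc by auto
    next
      case False
      have "V.lin_dep (S \<union> {c})"
      proof (rule ccontr)
        assume "\<not> V.lin_dep (S \<union> {c})"
        hence "S \<union> {c} = S" using max c unfolding maximal_def by (metis Un_least Un_upper1 SM empty_subsetI insert_subset)
        thus False using False by auto
      qed
      thus ?thesis using V.lin_dep_iff_in_span[OF _ li, of c] Sc colsc c False by auto
    qed
  qed
  moreover have "V.span S \<subseteq> V.span (set (cols M))" by (rule V.span_is_monotone[OF SM])
  ultimately have "V.span (set (cols M)) = V.span (set (cols P))" unfolding colsP ds by blast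
  hence eq: "colsp M = colsp P"
    unfolding colsp_col_space[OF M] colsp_col_space[OF Pc] V.col_space_def by simp
  have inj: "inj_on (\<lambda>x. P *\<^sub>v x) (carrier_vec (length ds))"
  proof (rule inj_onI, rule ccontr)
    fix x y assume x: "x \<in> carrier_vec (length ds)" and y: "y \<in> carrier_vec (length ds)"
      and e: "P *\<^sub>v x = P *\<^sub>v y" and ne: "x \<noteq> y"
    have "P *\<^sub>v (x - y) = 0\<^sub>v k"
    proof -
      have "P *\<^sub>v (x - y) = P *\<^sub>v x - P *\<^sub>v y" using Pc x y by (simp add: mult_minus_distrib_mat_vec)
      thus ?thesis using e Pc by (intro eq_vecI) auto
    qed
    moreover have "x - y \<noteq> 0\<^sub>v (length ds)"
    proof
      assume z: "x - y = 0\<^sub>v (length ds)"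
      have "x $ i = y $ i" if "i < length ds" for i using arg_cong[OF z, of "\<lambda>v. v $ i"] that x y by simp
      hence "x = y" using x y by (intro eq_vecI) auto
      thus False using ne by simp
    qed
    moreover have xy: "x - y \<in> carrier_vec (length ds)" using x y by simp
    ultimately have "V.lin_dep (set (cols P))"
      using V.lin_depI[OF Pc xy] colsP ds by auto
    thus False using li colsP ds by simp
  qed
  have "card (colsp P) = card (carrier_vec (length ds) :: 'a vec set)"
    unfolding colsp_def using Pc card_image[OF inj] by simp
  also have "\<dots> = card (UNIV::'a set) ^ card S" using ds distinct_card[of ds] by (simp add: card_carrier_vec')
  finally show ?thesis using eq rk by simp
qed

lemma SPAN_empty: "SPAN k {} = {0\<^sub>v k}"
proof (rule SPAN_eqI)
  show "subsp k {0\<^sub>v k}" unfolding subsp_def by auto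
qed (auto simp: subsp_def)

definition indep :: "nat \<Rightarrow> 'a::field vec list \<Rightarrow> bool" where
  "indep k vs \<longleftrightarrow> set vs \<subseteq> carrier_vec k \<and> (\<forall>i<length vs. vs ! i \<notin> SPAN k (set (take i vs)))"

lemma indep_Nil[simp]: "indep k []" by (simp add: indep_def)

lemma indep_snoc: "indep k (vs @ [v]) \<longleftrightarrow> indep k vs \<and> v \<in> carrier_vec k \<and> v \<notin> SPAN k (set vs)"
  unfolding indep_def by (auto simp: nth_append less_Suc_eq)

lemma card_field_ge2: "card (UNIV :: 'a::{finite,field} set) \<ge> 2"
proof -
  have "{0, 1::'a} \<subseteq> UNIV" by simp
  hence "card {0, 1::'a} \<le> card (UNIV :: 'a set)" by (intro card_mono) auto
  thus ?thesis by simp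
qed

lemma card_SPAN_indep: fixes vs :: "'a::{finite,field} vec list"
  shows "set vs \<subseteq> carrier_vec k \<Longrightarrow>
    card (SPAN k (set vs)) \<le> card (UNIV :: 'a set) ^ length vs \<and>
    (card (SPAN k (set vs)) = card (UNIV :: 'a set) ^ length vs \<longleftrightarrow> indep k vs)"
proof (induction vs rule: rev_induct)
  case Nil
  then show ?case by (simp add: SPAN_empty)
next
  case (snoc v vs)
  let ?q = "card (UNIV :: 'a set)"
  have v: "v \<in> carrier_vec k" and vs: "set vs \<subseteq> carrier_vec k" using snoc.prems by auto
  note IH = snoc.IH[OF vs]
  have q2: "?q \<ge> 2" by (rule card_field_ge2)
  show ?case
  proof (cases "v \<in> SPAN k (set vs)")
    case True
    have eq: "SPAN k (set (vs @ [v])) = SPAN k (set vs)" using SPAN_insert_mem[OF True vs] by simp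
    have lt: "?q ^ length vs < ?q * ?q ^ length vs" using q2 by simp
    have c0: "card (SPAN k (set vs)) < ?q * ?q ^ length vs" using IH lt by linarith
    have c1: "card (SPAN k (set (vs @ [v]))) \<le> ?q ^ length (vs @ [v])" using c0 eq by simp
    have c2: "card (SPAN k (set (vs @ [v]))) \<noteq> ?q ^ length (vs @ [v])" using c0 eq by simp
    have c3: "\<not> indep k (vs @ [v])" using True indep_snoc by blast
    show ?thesis using c1 c2 c3 by simp
  next
    case False
    have eq: "card (SPAN k (set (vs @ [v]))) = ?q * card (SPAN k (set vs))"
      using card_SPAN_insert[OF v vs False] by simp
    show ?thesis unfolding eq indep_snoc using IH False v q2 by auto
  qed
qed

lemma card_SPAN_indep': "indep k (vs :: 'a::{finite,field} vec list) \<Longrightarrow> card (SPAN k (set vs)) = card (UNIV :: 'a set) ^ length vs"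
  using card_SPAN_indep[of vs k] unfolding indep_def by auto

lemma indep_take: "indep k vs \<Longrightarrow> indep k (take r vs)"
  unfolding indep_def by (auto simp: min_def dest: in_set_takeD)

lemma finite_SPAN: "S \<subseteq> carrier_vec k \<Longrightarrow> finite (SPAN k (S :: 'a::{finite,field} vec set))"
  using SPAN_carrier finite_subset finite_carrier_vec' by metis

lemma count_indep_lists:
  fixes S :: "nat \<Rightarrow> 'a::{finite,field} vec set"
  assumes sub: "\<And>i. subsp k (S i)" and mono: "\<And>i j. i \<le> j \<Longrightarrow> S i \<subseteq> S j"
  shows "card {vs. length vs = t \<and> indep k vs \<and> (\<forall>j<t. vs ! j \<in> S j)}
       = (\<Prod>i<t. card (S i) - card (UNIV :: 'a set) ^ i)"
proof (induction t)
  case 0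
  have "{vs. length vs = 0 \<and> indep k vs \<and> (\<forall>j<0. vs ! j \<in> S j)} = {[]}" by auto
  then show ?case by simp
next
  case (Suc t)
  let ?L = "\<lambda>t. {vs. length vs = t \<and> indep k vs \<and> (\<forall>j<t. vs ! j \<in> S j)}"
  let ?q = "card (UNIV :: 'a set)"
  have Sc: "S i \<subseteq> carrier_vec k" for i using subspD(1)[OF sub] .
  have eq: "?L (Suc t) = (\<lambda>(vs, v). vs @ [v]) ` (SIGMA vs:?L t. S t - SPAN k (set vs))"
  proof (intro equalityI subsetI)
    fix ws assume ws: "ws \<in> ?L (Suc t)"
    then obtain vs v where wsv: "ws = vs @ [v]" by (metis (mono_tags, lifting) length_Suc_conv_rev mem_Collect_eq)
    have lvs: "length vs = t" using ws wsv by simp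
    have ind: "indep k vs" "v \<in> carrier_vec k" "v \<notin> SPAN k (set vs)" using ws wsv indep_snoc by blast+
    have all: "\<forall>j<Suc t. (vs @ [v]) ! j \<in> S j" using ws wsv by blast
    have "\<forall>j<t. vs ! j \<in> S j"
    proof (intro allI impI)
      fix j assume "j < t"
      thus "vs ! j \<in> S j" using all[rule_format, of j] lvs by (simp add: nth_append)
    qed
    hence "vs \<in> ?L t" using lvs ind by blast
    moreover have "v \<in> S t" using all[rule_format, of t] lvs by (simp add: nth_append)
    ultimately have "(vs, v) \<in> (SIGMA vs:?L t. S t - SPAN k (set vs))" using ind(3) by blast
    thus "ws \<in> (\<lambda>(vs, v). vs @ [v]) ` (SIGMA vs:?L t. S t - SPAN k (set vs))"
      using wsv by (metis (no_types, lifting) case_prod_conv image_eqI)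
  next
    fix ws assume "ws \<in> (\<lambda>(vs, v). vs @ [v]) ` (SIGMA vs:?L t. S t - SPAN k (set vs))"
    then obtain p where p: "p \<in> (SIGMA vs:?L t. S t - SPAN k (set vs))" "ws = (\<lambda>(vs, v). vs @ [v]) p" by (rule imageE)
    obtain vs v where pvs: "p = (vs, v)" by (cases p)
    have wsv: "ws = vs @ [v]" and vs: "vs \<in> ?L t" and v: "v \<in> S t" "v \<notin> SPAN k (set vs)"
      using p unfolding pvs by auto
    have lvs: "length vs = t" and ind: "indep k vs" and all: "\<forall>j<t. vs ! j \<in> S j" using vs by blast+
    have "indep k (vs @ [v])" using ind v Sc indep_snoc by blast
    moreover have "\<forall>j<Suc t. (vs @ [v]) ! j \<in> S j"
    proof (intro allI impI)
      fix j assume "j < Suc t"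
      thus "(vs @ [v]) ! j \<in> S j"
      proof (cases "j < t")
        case True thus ?thesis using all lvs by (simp add: nth_append)
      next
        case False hence "j = t" using \<open>j < Suc t\<close> by simp
        thus ?thesis using v lvs by (simp add: nth_append)
      qed
    qed
    ultimately show "ws \<in> ?L (Suc t)" using wsv lvs by simp
  qed
  have inj: "inj_on (\<lambda>(vs, v). vs @ [v]) (SIGMA vs:?L t. S t - SPAN k (set vs))"
  proof -
    have "inj (\<lambda>(vs :: 'a vec list, v :: 'a vec). vs @ [v])" by (auto simp: inj_def)
    thus ?thesis by (rule inj_on_subset) simp
  qed
  have fin: "finite (?L t)"
  proof (rule finite_subset)
    show "?L t \<subseteq> {vs :: 'a vec list. set vs \<subseteq> carrier_vec k \<and> length vs = t}" by (auto simp: indep_def)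
    show "finite {vs :: 'a vec list. set vs \<subseteq> carrier_vec k \<and> length vs = t}"
      by (rule finite_lists_length_eq) simp
  qed
  have cardv: "card (S t - SPAN k (set vs)) = card (S t) - ?q ^ t" if "vs \<in> ?L t" for vs
  proof -
    have ind: "indep k vs" and l: "length vs = t" using that by auto
    have "set vs \<subseteq> S t"
    proof
      fix x assume "x \<in> set vs"
      then obtain j where "j < t" "x = vs ! j" using l by (auto simp: in_set_conv_nth)
      thus "x \<in> S t" using that mono[of j t] by auto
    qed
    hence "SPAN k (set vs) \<subseteq> S t" by (rule SPAN_least[OF sub])
    moreover have "finite (S t)" using Sc finite_subset finite_carrier_vec' by metis
    ultimately have "card (S t - SPAN k (set vs)) = card (S t) - card (SPAN k (set vs))"
      by (simp add: card_Diff_subset finite_subset)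
    thus ?thesis using card_SPAN_indep'[OF ind] l by simp
  qed
  have "card (?L (Suc t)) = card (SIGMA vs:?L t. S t - SPAN k (set vs))"
    unfolding eq by (rule card_image[OF inj])
  also have "\<dots> = (\<Sum>vs\<in>?L t. card (S t - SPAN k (set vs)))"
  proof (rule card_SigmaI[OF fin])
    have "finite (S t)" using Sc[of t] finite_subset finite_carrier_vec' by metis
    thus "\<forall>a\<in>?L t. finite (S t - SPAN k (set a))" by blast
  qed
  also have "\<dots> = (\<Sum>vs\<in>?L t. card (S t) - ?q ^ t)" by (rule sum.cong) (auto simp: cardv)
  also have "\<dots> = card (?L t) * (card (S t) - ?q ^ t)" by simp
  finally show ?case using Suc.IH by simp
qed


definition GL :: "nat \<Rightarrow> 'a::field mat set" where
  "GL k = {Q \<in> carrier_mat k k. colsp Q = carrier_vec k}"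

lemma GL_indep: fixes Q :: "'a::{finite,field} mat" assumes Q: "Q \<in> carrier_mat k k"
  shows "Q \<in> GL k \<longleftrightarrow> indep k (cols Q)"
proof -
  have sc: "set (cols Q) \<subseteq> carrier_vec k" using Q cols_dim by blast
  have l: "length (cols Q) = k" using Q by simp
  have eq: "colsp Q = SPAN k (set (cols Q))" by (rule colsp_SPAN[OF Q])
  have sub: "colsp Q \<subseteq> carrier_vec k" by (rule colsp_carrier[OF Q])
  note ci = card_SPAN_indep[OF sc]
  show ?thesis
  proof
    assume "Q \<in> GL k"
    hence "colsp Q = carrier_vec k" unfolding GL_def by auto
    hence "card (SPAN k (set (cols Q))) = card (UNIV::'a set) ^ length (cols Q)"
      using eq l by (simp add: card_carrier_vec')
    thus "indep k (cols Q)" using ci by simp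
  next
    assume "indep k (cols Q)"
    hence "card (colsp Q) = card (carrier_vec k :: 'a vec set)"
      using ci eq l by (simp add: card_carrier_vec')
    hence "colsp Q = carrier_vec k" using sub by (intro card_subset_eq) auto
    thus "Q \<in> GL k" using Q unfolding GL_def by auto
  qed
qed

lemma GL_inverse: fixes Q :: "'a::{finite,field} mat" assumes Q: "Q \<in> GL k"
  shows "\<exists>P \<in> carrier_mat k k. P * Q = 1\<^sub>m k \<and> Q * P = 1\<^sub>m k"
proof -
  have Qc: "Q \<in> carrier_mat k k" and surj: "(\<lambda>x. Q *\<^sub>v x) ` carrier_vec k = carrier_vec k"
    using Q unfolding GL_def colsp_def by auto
  have inj: "inj_on (\<lambda>x. Q *\<^sub>v x) (carrier_vec k)"
    by (rule eq_card_imp_inj_on) (simp_all add: surj)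
  have "det Q \<noteq> 0"
  proof
    assume "det Q = 0"
    then obtain v where v: "v \<in> carrier_vec k" "v \<noteq> 0\<^sub>v k" "Q *\<^sub>v v = 0\<^sub>v k"
      using det_0_iff_vec_prod_zero[OF Qc] by blast
    have "Q *\<^sub>v 0\<^sub>v k = 0\<^sub>v k" using Qc by (intro eq_vecI) (auto simp: scalar_prod_def)
    hence "v = 0\<^sub>v k" using inj v unfolding inj_on_def by (metis zero_carrier_vec)
    thus False using v by simp
  qed
  hence "Q \<in> Units (ring_mat TYPE('a) k undefined)" by (rule det_non_zero_imp_unit[OF Qc])
  thus ?thesis unfolding Units_def ring_mat_def by auto
qed

lemma count_GL_span: fixes V :: "'a::{finite,field} vec set"
  assumes V: "subsp k V" and cV: "card V = card (UNIV::'a set) ^ r" and r: "r \<le> k"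
  shows "card {Q \<in> GL k. SPAN k (set (take r (cols Q))) = V}
    = (\<Prod>i<r. card (UNIV::'a set) ^ r - card (UNIV::'a set) ^ i) * (\<Prod>i\<in>{r..<k}. card (UNIV::'a set) ^ k - card (UNIV::'a set) ^ i)"
proof -
  let ?q = "card (UNIV::'a set)"
  define S where "S i = (if i < r then V else carrier_vec k)" for i
  have Vc: "V \<subseteq> carrier_vec k" using subspD(1)[OF V] .
  have sub: "subsp k (S i)" for i using V subsp_carrier unfolding S_def by auto
  have mono: "S i \<subseteq> S j" if "i \<le> j" for i j using that Vc unfolding S_def by auto
  let ?L = "{vs. length vs = k \<and> indep k vs \<and> (\<forall>j<k. vs ! j \<in> S j)}"
  have bij: "bij_betw cols {Q \<in> GL k. SPAN k (set (take r (cols Q))) = V} ?L"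
  proof (rule bij_betwI[where g = "mat_of_cols k"])
    show "cols \<in> {Q \<in> GL k. SPAN k (set (take r (cols Q))) = V} \<rightarrow> ?L"
    proof
      fix Q assume "Q \<in> {Q \<in> GL k. SPAN k (set (take r (cols Q))) = V}"
      hence Q: "Q \<in> GL k" and sp: "SPAN k (set (take r (cols Q))) = V" by auto
      have Qc: "Q \<in> carrier_mat k k" using Q unfolding GL_def by auto
      have ind: "indep k (cols Q)" using GL_indep[OF Qc] Q by simp
      have "cols Q ! j \<in> S j" if "j < k" for j
      proof (cases "j < r")
        case True
        hence "cols Q ! j \<in> set (take r (cols Q))" using Qc that
          by (metis in_set_conv_nth length_take min.absorb_iff2 nth_take r cols_length carrier_matD(2))
        thus ?thesis using sp SPAN_sup True unfolding S_def by auto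
      next
        case False
        thus ?thesis using ind that Qc unfolding S_def indep_def by (auto simp: cols_length)
      qed
      thus "cols Q \<in> ?L" using Qc ind by auto
    qed
    show "mat_of_cols k \<in> ?L \<rightarrow> {Q \<in> GL k. SPAN k (set (take r (cols Q))) = V}"
    proof
      fix vs assume vs: "vs \<in> ?L"
      have l: "length vs = k" and ind: "indep k vs" and inS: "\<forall>j<k. vs ! j \<in> S j" using vs by auto
      have sc: "set vs \<subseteq> carrier_vec k" using ind unfolding indep_def by auto
      have cq: "cols (mat_of_cols k vs) = vs" using sc by (intro cols_mat_of_cols) auto
      have Qc: "mat_of_cols k vs \<in> carrier_mat k k" using l by auto
      have G: "mat_of_cols k vs \<in> GL k" using GL_indep[OF Qc] cq ind by simp
      have tsub: "set (take r vs) \<subseteq> V"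
      proof
        fix x assume "x \<in> set (take r vs)"
        then obtain j where j: "j < length (take r vs)" "x = take r vs ! j" by (auto simp: in_set_conv_nth)
        hence "j < r" "j < k" using l by auto
        thus "x \<in> V" using inS j unfolding S_def by auto
      qed
      have "SPAN k (set (take r vs)) \<subseteq> V" by (rule SPAN_least[OF V tsub])
      moreover have "card (SPAN k (set (take r vs))) = ?q ^ r"
        using card_SPAN_indep'[OF indep_take[OF ind]] l r by (simp add: min_def)
      moreover have "finite V" using Vc finite_subset finite_carrier_vec' by metis
      ultimately have "SPAN k (set (take r vs)) = V" using cV by (intro card_subset_eq) auto
      thus "mat_of_cols k vs \<in> {Q \<in> GL k. SPAN k (set (take r (cols Q))) = V}" using G cq by simp
    qed
    show "mat_of_cols k (cols Q) = Q" if "Q \<in> {Q \<in> GL k. SPAN k (set (take r (cols Q))) = V}" for Q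
      using that unfolding GL_def by auto
    show "cols (mat_of_cols k vs) = vs" if "vs \<in> ?L" for vs
      using that unfolding indep_def by (intro cols_mat_of_cols) auto
  qed
  have "card {Q \<in> GL k. SPAN k (set (take r (cols Q))) = V} = card ?L" by (rule bij_betw_same_card[OF bij])
  also have "\<dots> = (\<Prod>i<k. card (S i) - ?q ^ i)" by (rule count_indep_lists[OF sub mono])
  also have "\<dots> = (\<Prod>i\<in>{0..<r}. card (S i) - ?q ^ i) * (\<Prod>i\<in>{r..<k}. card (S i) - ?q ^ i)"
    using r by (simp add: lessThan_atLeast0 prod.atLeastLessThan_concat)
  also have "\<dots> = (\<Prod>i<r. ?q ^ r - ?q ^ i) * (\<Prod>i\<in>{r..<k}. ?q ^ k - ?q ^ i)"
    by (simp add: S_def cV lessThan_atLeast0 card_carrier_vec')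
  finally show ?thesis .
qed

lemma card_GL: "card (GL k :: 'a::{finite,field} mat set) = (\<Prod>i<k. card (UNIV::'a set) ^ k - card (UNIV::'a set) ^ i)"
proof -
  have z: "subsp k {0\<^sub>v k :: 'a vec}" by (auto simp: subsp_def)
  have "card {Q \<in> (GL k :: 'a mat set). SPAN k (set (take 0 (cols Q))) = {0\<^sub>v k}} =
     (\<Prod>i<0. card (UNIV::'a set) ^ 0 - card (UNIV::'a set) ^ i) * (\<Prod>i\<in>{0..<k}. card (UNIV::'a set) ^ k - card (UNIV::'a set) ^ i)"
    by (rule count_GL_span[OF z]) auto
  thus ?thesis by (simp add: SPAN_empty lessThan_atLeast0)
qed


definition Rset :: "'a::field mat \<Rightarrow> 'a mat \<Rightarrow> 'a vec set" where
  "Rset A B = \<Inter>{V. subsp (dim_row A) V \<and> colsp B \<subseteq> V \<and> (\<forall>x\<in>V. A *\<^sub>v x \<in> V)}"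

lemma subsp_Inter: assumes "F \<noteq> {}" "\<And>V. V \<in> F \<Longrightarrow> subsp k V" shows "subsp k (\<Inter>F)"
  using assms unfolding subsp_def by blast

lemma Rset_props: assumes A: "A \<in> carrier_mat k k" and B: "B \<in> carrier_mat k m"
  shows "subsp k (Rset A B)" "colsp B \<subseteq> Rset A B" "\<And>x. x \<in> Rset A B \<Longrightarrow> A *\<^sub>v x \<in> Rset A B"
proof -
  let ?F = "{V. subsp k V \<and> colsp B \<subseteq> V \<and> (\<forall>x\<in>V. A *\<^sub>v x \<in> V)}"
  have dr: "dim_row A = k" using A by auto
  have Fne: "carrier_vec k \<in> ?F" using subsp_carrier colsp_carrier[OF B] A by auto
  have "subsp k (\<Inter>?F)" by (rule subsp_Inter) (use Fne in auto)
  thus "subsp k (Rset A B)" unfolding Rset_def dr .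
  show "colsp B \<subseteq> Rset A B" unfolding Rset_def dr by auto
  fix x assume "x \<in> Rset A B" thus "A *\<^sub>v x \<in> Rset A B" unfolding Rset_def dr by auto
qed

lemma Rset_least: assumes A: "A \<in> carrier_mat k k" and V: "subsp k V" "colsp B \<subseteq> V" "\<And>x. x \<in> V \<Longrightarrow> A *\<^sub>v x \<in> V"
  shows "Rset A B \<subseteq> V"
  unfolding Rset_def using A V by auto

lemma Rset_carrier: "A \<in> carrier_mat k k \<Longrightarrow> B \<in> carrier_mat k m \<Longrightarrow> Rset A B \<subseteq> carrier_vec k"
  using Rset_props(1) subspD(1) by blast

lemma subsp_image: assumes P: "P \<in> carrier_mat k n" and V: "subsp n V"
  shows "subsp k ((\<lambda>x. P *\<^sub>v x) ` V)"
  unfolding subsp_def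
proof (intro conjI ballI allI)
  have Vc: "V \<subseteq> carrier_vec n" using subspD(1)[OF V] .
  show "(\<lambda>x. P *\<^sub>v x) ` V \<subseteq> carrier_vec k" using P Vc by auto
  have "P *\<^sub>v 0\<^sub>v n = 0\<^sub>v k" using P by (intro eq_vecI) (auto simp: scalar_prod_def)
  thus "0\<^sub>v k \<in> (\<lambda>x. P *\<^sub>v x) ` V" using subspD(2)[OF V] by (metis image_eqI)
  fix x y assume "x \<in> (\<lambda>x. P *\<^sub>v x) ` V" "y \<in> (\<lambda>x. P *\<^sub>v x) ` V"
  then obtain a b where ab: "a \<in> V" "b \<in> V" "x = P *\<^sub>v a" "y = P *\<^sub>v b" by auto
  have "x + y = P *\<^sub>v (a + b)" using ab Vc P by (simp add: mult_add_distrib_mat_vec subsetD)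
  thus "x + y \<in> (\<lambda>x. P *\<^sub>v x) ` V" using subspD(3)[OF V ab(1,2)] by auto
next
  have Vc: "V \<subseteq> carrier_vec n" using subspD(1)[OF V] .
  fix c x assume "x \<in> (\<lambda>x. P *\<^sub>v x) ` V"
  then obtain a where a: "a \<in> V" "x = P *\<^sub>v a" by auto
  have "c \<cdot>\<^sub>v x = P *\<^sub>v (c \<cdot>\<^sub>v a)" using a Vc P by (simp add: mult_mat_vec subsetD)
  thus "c \<cdot>\<^sub>v x \<in> (\<lambda>x. P *\<^sub>v x) ` V" using subspD(4)[OF V a(1)] by auto
qed

lemma Rset_conj_sub:
  assumes A: "A \<in> carrier_mat k k" and B: "B \<in> carrier_mat k m"
    and P: "P \<in> carrier_mat k k" and Q: "Q \<in> carrier_mat k k" and QP: "Q * P = 1\<^sub>m k"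
  shows "Rset (P * A * Q) (P * B) \<subseteq> (\<lambda>x. P *\<^sub>v x) ` Rset A B"
proof (rule Rset_least)
  show "P * A * Q \<in> carrier_mat k k" using P A Q by auto
  have R: "subsp k (Rset A B)" using Rset_props(1)[OF A B] .
  have Rc: "Rset A B \<subseteq> carrier_vec k" using subspD(1)[OF R] .
  show "subsp k ((\<lambda>x. P *\<^sub>v x) ` Rset A B)" by (rule subsp_image[OF P R])
  show "colsp (P * B) \<subseteq> (\<lambda>x. P *\<^sub>v x) ` Rset A B"
  proof
    fix y assume "y \<in> colsp (P * B)"
    then obtain x where x: "x \<in> carrier_vec m" "y = (P * B) *\<^sub>v x" unfolding colsp_def using P B by auto
    have "y = P *\<^sub>v (B *\<^sub>v x)" using x P B by (simp add: assoc_mult_mat_vec)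
    moreover have "B *\<^sub>v x \<in> Rset A B" using Rset_props(2)[OF A B] x B unfolding colsp_def by auto
    ultimately show "y \<in> (\<lambda>x. P *\<^sub>v x) ` Rset A B" by auto
  qed
  fix y assume "y \<in> (\<lambda>x. P *\<^sub>v x) ` Rset A B"
  then obtain z where z: "z \<in> Rset A B" "y = P *\<^sub>v z" by auto
  have zc: "z \<in> carrier_vec k" using z Rc by auto
  have "Q *\<^sub>v (P *\<^sub>v z) = z" using zc P Q QP by (metis assoc_mult_mat_vec one_mult_mat_vec)
  have yc: "y \<in> carrier_vec k" using z zc P by simp
  have "(P * A * Q) *\<^sub>v y = (P * A) *\<^sub>v (Q *\<^sub>v y)" using P A Q yc by (intro assoc_mult_mat_vec) auto
  also have "\<dots> = P *\<^sub>v (A *\<^sub>v (Q *\<^sub>v y))" using P A Q yc by (intro assoc_mult_mat_vec) auto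
  also have "\<dots> = P *\<^sub>v (A *\<^sub>v z)" using \<open>Q *\<^sub>v (P *\<^sub>v z) = z\<close> z by simp
  finally have "(P * A * Q) *\<^sub>v y = P *\<^sub>v (A *\<^sub>v z)" .
  thus "(P * A * Q) *\<^sub>v y \<in> (\<lambda>x. P *\<^sub>v x) ` Rset A B" using Rset_props(3)[OF A B z(1)] by auto
qed

lemma Rset_conj:
  assumes A: "A \<in> carrier_mat k k" and B: "B \<in> carrier_mat k m"
    and P: "P \<in> carrier_mat k k" and Q: "Q \<in> carrier_mat k k" and QP: "Q * P = 1\<^sub>m k" and PQ: "P * Q = 1\<^sub>m k"
  shows "Rset (P * A * Q) (P * B) = (\<lambda>x. P *\<^sub>v x) ` Rset A B"
proof
  show "Rset (P * A * Q) (P * B) \<subseteq> (\<lambda>x. P *\<^sub>v x) ` Rset A B" by (rule Rset_conj_sub[OF A B P Q QP])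
  have A': "P * A * Q \<in> carrier_mat k k" and B': "P * B \<in> carrier_mat k m" using P A Q B by auto
  have e1: "Q * (P * A * Q) * P = A"
  proof -
    have "Q * (P * A * Q) * P = (Q * P) * A * (Q * P)" using P A Q
      by (simp add: assoc_mult_mat[of _ k k _ k _ k])
    thus ?thesis using QP A by simp
  qed
  have e2: "Q * (P * B) = B" using QP P Q B by (simp add: assoc_mult_mat[symmetric, of _ k k _ k _ m])
  have sub: "Rset A B \<subseteq> (\<lambda>x. Q *\<^sub>v x) ` Rset (P * A * Q) (P * B)"
    using Rset_conj_sub[OF A' B' Q P PQ] unfolding e1 e2 .
  show "(\<lambda>x. P *\<^sub>v x) ` Rset A B \<subseteq> Rset (P * A * Q) (P * B)"
  proof
    fix y assume "y \<in> (\<lambda>x. P *\<^sub>v x) ` Rset A B"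
    then obtain z where z: "z \<in> Rset A B" "y = P *\<^sub>v z" by auto
    then obtain w where w: "w \<in> Rset (P * A * Q) (P * B)" "z = Q *\<^sub>v w" using sub by auto
    have wc: "w \<in> carrier_vec k" using Rset_carrier[OF A' B'] w by auto
    have "y = w" using z w wc P Q PQ by (metis assoc_mult_mat_vec one_mult_mat_vec)
    thus "y \<in> Rset (P * A * Q) (P * B)" using w by simp
  qed
qed


definition pad :: "nat \<Rightarrow> nat \<Rightarrow> 'a::field vec \<Rightarrow> 'a vec" where
  "pad r k x = vec k (\<lambda>i. if i < r then x $ i else 0)"

definition E :: "nat \<Rightarrow> nat \<Rightarrow> 'a::field vec set" where
  "E r k = pad r k ` carrier_vec r"

lemma pad_carrier[simp]: "pad r k x \<in> carrier_vec k" by (simp add: pad_def)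
lemma pad_index[simp]: "i < k \<Longrightarrow> pad r k x $ i = (if i < r then x $ i else 0)" by (simp add: pad_def)
lemma dim_pad[simp]: "dim_vec (pad r k x) = k" by (simp add: pad_def)

lemma pad_add: "x \<in> carrier_vec r \<Longrightarrow> y \<in> carrier_vec r \<Longrightarrow> pad r k (x + y) = pad r k x + pad r k y"
  by (intro eq_vecI) auto
lemma pad_smult: "x \<in> carrier_vec r \<Longrightarrow> pad r k (c \<cdot>\<^sub>v x) = c \<cdot>\<^sub>v pad r k x"
  by (intro eq_vecI) auto
lemma pad_zero: "pad r k (0\<^sub>v r) = 0\<^sub>v k" by (intro eq_vecI) auto

lemma pad_inj: assumes "r \<le> k" shows "inj_on (pad r k) (carrier_vec r)"
proof (rule inj_onI)
  fix x y assume x: "x \<in> carrier_vec r" and y: "y \<in> carrier_vec r" and e: "pad r k x = pad r k y"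
  show "x = y"
  proof (rule eq_vecI)
    fix i assume "i < dim_vec y" hence i: "i < r" using y by auto
    show "x $ i = y $ i" using arg_cong[OF e, of "\<lambda>v. v $ i"] i assms by simp
  qed (use x y in auto)
qed

lemma sum_lessThan_restrict: fixes r k :: nat assumes "r \<le> k" "\<And>j. r \<le> j \<Longrightarrow> j < k \<Longrightarrow> f j = 0"
  shows "(\<Sum>j<k. f j) = (\<Sum>j<r. (f j :: 'a::comm_monoid_add))"
proof (rule sum.mono_neutral_left[symmetric])
  show "finite {..<k}" by simp
  show "{..<r} \<subseteq> {..<k}" using assms(1) by auto
  show "\<forall>i\<in>{..<k} - {..<r}. f i = 0" using assms(2) by auto
qed

lemma mult_pad: assumes Q: "Q \<in> carrier_mat k k" and r: "r \<le> k" and x: "x \<in> carrier_vec r"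
  shows "Q *\<^sub>v pad r k x = mat_of_cols k (take r (cols Q)) *\<^sub>v x"
proof (rule eq_vecI)
  fix i assume "i < dim_vec (mat_of_cols k (take r (cols Q)) *\<^sub>v x)"
  hence i: "i < k" by simp
  have Mc: "mat_of_cols k (take r (cols Q)) \<in> carrier_mat k r" using Q r by auto
  have "(Q *\<^sub>v pad r k x) $ i = (\<Sum>j<k. Q $$ (i,j) * pad r k x $ j)" by (rule mult_mat_vec_sum[OF Q _ i]) simp
  also have "\<dots> = (\<Sum>j<r. Q $$ (i,j) * pad r k x $ j)" by (rule sum_lessThan_restrict[OF r]) simp
  also have "\<dots> = (\<Sum>j<r. mat_of_cols k (take r (cols Q)) $$ (i,j) * x $ j)"
    using Q r i by (intro sum.cong) (auto simp: mat_of_cols_def)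
  also have "\<dots> = (mat_of_cols k (take r (cols Q)) *\<^sub>v x) $ i" by (rule mult_mat_vec_sum[OF Mc x i, symmetric])
  finally show "(Q *\<^sub>v pad r k x) $ i = (mat_of_cols k (take r (cols Q)) *\<^sub>v x) $ i" .
qed (use Q in auto)

lemma image_E: assumes Q: "Q \<in> carrier_mat k k" and r: "r \<le> k"
  shows "(\<lambda>x. Q *\<^sub>v x) ` E r k = SPAN k (set (take r (cols Q)))"
proof -
  let ?M = "mat_of_cols k (take r (cols Q))"
  have Mc: "?M \<in> carrier_mat k r" using Q r by auto
  have "set (take r (cols Q)) \<subseteq> carrier_vec k" using cols_dim[of Q] Q set_take_subset by fastforce
  hence cM: "cols ?M = take r (cols Q)" by (intro cols_mat_of_cols) auto
  have "(\<lambda>x. Q *\<^sub>v x) ` E r k = colsp ?M"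
    unfolding E_def colsp_def image_image using mult_pad[OF Q r] Mc by (auto intro!: image_cong)
  also have "\<dots> = SPAN k (set (take r (cols Q)))" unfolding colsp_SPAN[OF Mc] cM ..
  finally show ?thesis .
qed

definition ul :: "nat \<Rightarrow> 'a::field mat \<Rightarrow> 'a mat" where "ul r A = mat r r (\<lambda>(i,j). A $$ (i,j))"
definition tp :: "nat \<Rightarrow> 'a::field mat \<Rightarrow> 'a mat" where "tp r B = mat r (dim_col B) (\<lambda>(i,j). B $$ (i,j))"
definition blockcond :: "nat \<Rightarrow> 'a::field mat \<Rightarrow> 'a mat \<Rightarrow> bool" where
  "blockcond r A B \<longleftrightarrow> (\<forall>i j. r \<le> i \<and> i < dim_row A \<and> j < r \<longrightarrow> A $$ (i,j) = 0)
     \<and> (\<forall>i j. r \<le> i \<and> i < dim_row B \<and> j < dim_col B \<longrightarrow> B $$ (i,j) = 0)"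

lemma ul_carrier[simp]: "ul r A \<in> carrier_mat r r" by (simp add: ul_def)
lemma tp_carrier[simp]: "B \<in> carrier_mat k m \<Longrightarrow> tp r B \<in> carrier_mat r m" by (simp add: tp_def)

lemma block_multA: assumes A: "A \<in> carrier_mat k k" and r: "r \<le> k" and bc: "blockcond r A B" and x: "x \<in> carrier_vec r"
  shows "A *\<^sub>v pad r k x = pad r k (ul r A *\<^sub>v x)"
proof (rule eq_vecI)
  fix i assume "i < dim_vec (pad r k (ul r A *\<^sub>v x))" hence i: "i < k" by simp
  have "(A *\<^sub>v pad r k x) $ i = (\<Sum>j<k. A $$ (i,j) * pad r k x $ j)" by (rule mult_mat_vec_sum[OF A _ i]) simp
  also have "\<dots> = (\<Sum>j<r. A $$ (i,j) * x $ j)"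
    by (subst sum_lessThan_restrict[OF r]) (use r in auto)
  also have "\<dots> = pad r k (ul r A *\<^sub>v x) $ i"
  proof (cases "i < r")
    case True thus ?thesis using i x r by (simp add: mult_mat_vec_sum[OF ul_carrier x True]) (simp add: ul_def)
  next
    case False thus ?thesis using i bc A unfolding blockcond_def by simp
  qed
  finally show "(A *\<^sub>v pad r k x) $ i = pad r k (ul r A *\<^sub>v x) $ i" .
qed (use A in auto)

lemma block_multB: assumes B: "B \<in> carrier_mat k m" and r: "r \<le> k" and bc: "blockcond r A B" and y: "y \<in> carrier_vec m"
  shows "B *\<^sub>v y = pad r k (tp r B *\<^sub>v y)"
proof (rule eq_vecI)
  fix i assume "i < dim_vec (pad r k (tp r B *\<^sub>v y))" hence i: "i < k" by simp
  show "(B *\<^sub>v y) $ i = pad r k (tp r B *\<^sub>v y) $ i"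
  proof (cases "i < r")
    case True thus ?thesis using i y r B
      by (simp add: mult_mat_vec_sum[OF tp_carrier[OF B] y True] mult_mat_vec_sum[OF B y i]) (simp add: tp_def)
  next
    case False thus ?thesis using i bc B y unfolding blockcond_def by (simp add: mult_mat_vec_sum[OF B y i])
  qed
qed (use B in auto)

lemma Rset_block: assumes A: "A \<in> carrier_mat k k" and B: "B \<in> carrier_mat k m" and r: "r \<le> k"
  and bc: "blockcond r A B"
  shows "Rset A B = pad r k ` Rset (ul r A) (tp r B)"
proof
  have A1: "ul r A \<in> carrier_mat r r" and B1: "tp r B \<in> carrier_mat r m" using B by auto
  have R1: "subsp r (Rset (ul r A) (tp r B))" by (rule Rset_props(1)[OF A1 B1])
  have R1c: "Rset (ul r A) (tp r B) \<subseteq> carrier_vec r" using subspD(1)[OF R1] .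
  show "Rset A B \<subseteq> pad r k ` Rset (ul r A) (tp r B)"
  proof (rule Rset_least[OF A])
    show "subsp k (pad r k ` Rset (ul r A) (tp r B))" unfolding subsp_def
    proof (intro conjI ballI allI)
      show "pad r k ` Rset (ul r A) (tp r B) \<subseteq> carrier_vec k" by auto
      show "0\<^sub>v k \<in> pad r k ` Rset (ul r A) (tp r B)" using subspD(2)[OF R1] pad_zero by (metis image_eqI)
    next
      fix x y assume "x \<in> pad r k ` Rset (ul r A) (tp r B)" "y \<in> pad r k ` Rset (ul r A) (tp r B)"
      then obtain a b where ab: "a \<in> Rset (ul r A) (tp r B)" "b \<in> Rset (ul r A) (tp r B)" "x = pad r k a" "y = pad r k b" by auto
      have "x + y = pad r k (a + b)" using ab R1c by (simp add: pad_add subsetD)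
      thus "x + y \<in> pad r k ` Rset (ul r A) (tp r B)" using subspD(3)[OF R1 ab(1,2)] by auto
    next
      fix c x assume "x \<in> pad r k ` Rset (ul r A) (tp r B)"
      then obtain a where a: "a \<in> Rset (ul r A) (tp r B)" "x = pad r k a" by auto
      have "c \<cdot>\<^sub>v x = pad r k (c \<cdot>\<^sub>v a)" using a R1c by (simp add: pad_smult subsetD)
      thus "c \<cdot>\<^sub>v x \<in> pad r k ` Rset (ul r A) (tp r B)" using subspD(4)[OF R1 a(1)] by auto
    qed
    show "colsp B \<subseteq> pad r k ` Rset (ul r A) (tp r B)"
    proof
      fix z assume "z \<in> colsp B"
      then obtain y where y: "y \<in> carrier_vec m" "z = B *\<^sub>v y" using B unfolding colsp_def by auto
      have "tp r B *\<^sub>v y \<in> Rset (ul r A) (tp r B)" using Rset_props(2)[OF A1 B1] y B1 unfolding colsp_def by auto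
      thus "z \<in> pad r k ` Rset (ul r A) (tp r B)" using block_multB[OF B r bc y(1)] y(2) by auto
    qed
    fix z assume "z \<in> pad r k ` Rset (ul r A) (tp r B)"
    then obtain a where a: "a \<in> Rset (ul r A) (tp r B)" "z = pad r k a" by auto
    have "A *\<^sub>v z = pad r k (ul r A *\<^sub>v a)" using block_multA[OF A r bc] a R1c by auto
    thus "A *\<^sub>v z \<in> pad r k ` Rset (ul r A) (tp r B)" using Rset_props(3)[OF A1 B1 a(1)] by auto
  qed
  let ?W = "{x \<in> carrier_vec r. pad r k x \<in> Rset A B}"
  have R: "subsp k (Rset A B)" by (rule Rset_props(1)[OF A B])
  have "Rset (ul r A) (tp r B) \<subseteq> ?W"
  proof (rule Rset_least[OF A1])
    show "subsp r ?W" unfolding subsp_def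
    proof (intro conjI ballI allI)
      show "?W \<subseteq> carrier_vec r" by auto
      show "0\<^sub>v r \<in> ?W" using subspD(2)[OF R] by (simp add: pad_zero)
    next
      fix x y assume "x \<in> ?W" "y \<in> ?W"
      thus "x + y \<in> ?W" using subspD(3)[OF R] by (simp add: pad_add)
    next
      fix c x assume "x \<in> ?W"
      thus "c \<cdot>\<^sub>v x \<in> ?W" using subspD(4)[OF R] by (simp add: pad_smult)
    qed
    show "colsp (tp r B) \<subseteq> ?W"
    proof
      fix z assume "z \<in> colsp (tp r B)"
      then obtain y where y: "y \<in> carrier_vec m" "z = tp r B *\<^sub>v y" using B1 unfolding colsp_def by auto
      have "B *\<^sub>v y \<in> Rset A B" using Rset_props(2)[OF A B] y B unfolding colsp_def by auto
      thus "z \<in> ?W" using block_multB[OF B r bc y(1)] y B1 by auto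
    qed
    fix z assume "z \<in> ?W"
    hence z: "z \<in> carrier_vec r" "pad r k z \<in> Rset A B" by auto
    have "pad r k (ul r A *\<^sub>v z) = A *\<^sub>v pad r k z" using block_multA[OF A r bc z(1)] by simp
    moreover have "ul r A *\<^sub>v z \<in> carrier_vec r" by (rule mult_mat_vec_carrier[OF ul_carrier z(1)])
    ultimately show "ul r A *\<^sub>v z \<in> ?W" using Rset_props(3)[OF A B z(2)] by auto
  qed
  thus "pad r k ` Rset (ul r A) (tp r B) \<subseteq> Rset A B" by auto
qed

lemma mult_unit_vec_col: fixes M :: "'a::field mat" assumes M: "M \<in> carrier_mat k n" and i: "i < n" shows "M *\<^sub>v unit_vec n i = col M i"
  using M i by (intro eq_vecI) (auto simp: scalar_prod_def unit_vec_def sum.delta' lessThan_atLeast0[symmetric]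
        if_distrib cong: if_cong)

lemma E_zero: assumes "x \<in> E r k" "r \<le> i" "i < k" shows "x $ i = 0"
  using assms unfolding E_def by auto

lemma Rset_E_iff: assumes A: "A \<in> carrier_mat k k" and B: "B \<in> carrier_mat k m" and r: "r \<le> k"
  shows "Rset A B = E r k \<longleftrightarrow> blockcond r A B \<and> Rset (ul r A) (tp r B) = carrier_vec r"
proof
  assume eq: "Rset A B = E r k"
  have bc: "blockcond r A B" unfolding blockcond_def
  proof (intro conjI allI impI)
    fix i j assume ij: "r \<le> i \<and> i < dim_row A \<and> j < r"
    have pe: "pad r k (unit_vec r j) = unit_vec k j" using ij r by (intro eq_vecI) auto
    have pm: "pad r k (unit_vec r j) \<in> E r k" unfolding E_def by simp
    have "unit_vec k j \<in> Rset A B" using pm[unfolded pe] eq by simp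
    hence "A *\<^sub>v unit_vec k j \<in> Rset A B" by (rule Rset_props(3)[OF A B])
    hence "A *\<^sub>v unit_vec k j \<in> E r k" using eq by simp
    moreover have "A *\<^sub>v unit_vec k j = col A j" using A ij r by (intro mult_unit_vec_col) auto
    ultimately have "col A j \<in> E r k" by simp
    thus "A $$ (i,j) = 0" using E_zero[of "col A j" r k i] ij A r by simp
  next
    fix i j assume ij: "r \<le> i \<and> i < dim_row B \<and> j < dim_col B"
    have "col B j \<in> colsp B" using col_in_colsp[OF B] ij B by simp
    hence "col B j \<in> E r k" using Rset_props(2)[OF A B] eq by auto
    thus "B $$ (i,j) = 0" using E_zero[of "col B j" r k i] ij B by simp
  qed
  have "pad r k ` Rset (ul r A) (tp r B) = pad r k ` carrier_vec r"
    using Rset_block[OF A B r bc] eq unfolding E_def by simp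
  moreover have RC: "Rset (ul r A) (tp r B) \<subseteq> carrier_vec r" by (rule Rset_carrier[OF ul_carrier tp_carrier[OF B]])
  ultimately have "Rset (ul r A) (tp r B) = carrier_vec r"
    using inj_on_image_eq_iff[OF pad_inj[OF r] RC subset_refl] by simp
  thus "blockcond r A B \<and> Rset (ul r A) (tp r B) = carrier_vec r" using bc by simp
next
  assume "blockcond r A B \<and> Rset (ul r A) (tp r B) = carrier_vec r"
  thus "Rset A B = E r k" using Rset_block[OF A B r] unfolding E_def by simp
qed


definition reachset :: "nat \<Rightarrow> nat \<Rightarrow> ('a::field mat \<times> 'a mat) set" where
  "reachset r m = {(A,B). A \<in> carrier_mat r r \<and> B \<in> carrier_mat r m \<and> Rset A B = carrier_vec r}"

definition ur :: "nat \<Rightarrow> nat \<Rightarrow> 'a::field mat \<Rightarrow> 'a mat" where "ur r k A = mat r (k - r) (\<lambda>(i,j). A $$ (i, r + j))"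
definition lr :: "nat \<Rightarrow> nat \<Rightarrow> 'a::field mat \<Rightarrow> 'a mat" where "lr r k A = mat (k - r) (k - r) (\<lambda>(i,j). A $$ (r + i, r + j))"

definition bA :: "nat \<Rightarrow> nat \<Rightarrow> 'a::field mat \<Rightarrow> 'a mat \<Rightarrow> 'a mat \<Rightarrow> 'a mat" where
  "bA r k A1 A2 A3 = mat k k (\<lambda>(i,j). if i < r then (if j < r then A1 $$ (i,j) else A2 $$ (i, j - r))
      else (if j < r then 0 else A3 $$ (i - r, j - r)))"
definition bB :: "nat \<Rightarrow> nat \<Rightarrow> nat \<Rightarrow> 'a::field mat \<Rightarrow> 'a mat" where
  "bB r k m B1 = mat k m (\<lambda>(i,j). if i < r then B1 $$ (i,j) else 0)"

lemma count_block: fixes r k m :: nat assumes r: "r \<le> k"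
  shows "card {(A :: 'a::{finite,field} mat, B). A \<in> carrier_mat k k \<and> B \<in> carrier_mat k m \<and> Rset A B = E r k}
       = card (UNIV :: 'a set) ^ (k * (k - r)) * card (reachset r m :: ('a mat \<times> 'a mat) set)"
proof -
  let ?q = "card (UNIV :: 'a set)"
  let ?X = "{(A :: 'a mat, B). A \<in> carrier_mat k k \<and> B \<in> carrier_mat k m \<and> Rset A B = E r k}"
  let ?Y = "(reachset r m :: ('a mat \<times> 'a mat) set) \<times> ((carrier_mat r (k - r) :: 'a mat set) \<times> (carrier_mat (k - r) (k - r) :: 'a mat set))"
  have X: "?X = {(A, B). A \<in> carrier_mat k k \<and> B \<in> carrier_mat k m \<and> blockcond r A B \<and> Rset (ul r A) (tp r B) = carrier_vec r}"
    using Rset_E_iff[OF _ _ r] by blast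
  have bij: "bij_betw (\<lambda>(A,B). ((ul r A, tp r B), (ur r k A, lr r k A))) ?X ?Y"
  proof (rule bij_betwI[where g = "\<lambda>((A1,B1),(A2,A3)). (bA r k A1 A2 A3, bB r k m B1)"])
    show "(\<lambda>(A,B). ((ul r A, tp r B), (ur r k A, lr r k A))) \<in> ?X \<rightarrow> ?Y"
      unfolding X by (auto simp: reachset_def ur_def lr_def)
    show "(\<lambda>((A1,B1),(A2,A3)). (bA r k A1 A2 A3, bB r k m B1)) \<in> ?Y \<rightarrow> ?X"
    proof
      fix y assume "y \<in> ?Y"
      then obtain A1 B1 A2 A3 where y: "y = ((A1,B1),(A2,A3))" and A1: "A1 \<in> carrier_mat r r" and B1: "B1 \<in> carrier_mat r m"
        and R1: "Rset A1 B1 = carrier_vec r" and A2: "A2 \<in> carrier_mat r (k - r)" and A3: "A3 \<in> carrier_mat (k - r) (k - r)"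
        unfolding reachset_def by auto
      have u: "ul r (bA r k A1 A2 A3) = A1" using A1 r by (intro eq_matI) (auto simp: ul_def bA_def)
      have t: "tp r (bB r k m B1) = B1" using B1 r by (intro eq_matI) (auto simp: tp_def bB_def)
      have bc: "blockcond r (bA r k A1 A2 A3) (bB r k m B1)" by (auto simp: blockcond_def bA_def bB_def)
      show "(\<lambda>((A1,B1),(A2,A3)). (bA r k A1 A2 A3, bB r k m B1)) y \<in> ?X"
        unfolding X y using u t bc R1 by (auto simp: bA_def bB_def)
    qed
    show "(\<lambda>((A1,B1),(A2,A3)). (bA r k A1 A2 A3, bB r k m B1)) ((\<lambda>(A,B). ((ul r A, tp r B), (ur r k A, lr r k A))) x) = x"
      if "x \<in> ?X" for x
    proof -
      obtain A B where x: "x = (A,B)" by (cases x)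
      have A: "A \<in> carrier_mat k k" and B: "B \<in> carrier_mat k m" and bc: "blockcond r A B" using that unfolding X x by auto
      have "bA r k (ul r A) (ur r k A) (lr r k A) = A"
        using A r bc by (intro eq_matI) (auto simp: bA_def ul_def ur_def lr_def blockcond_def)
      moreover have "bB r k m (tp r B) = B"
        using B r bc by (intro eq_matI) (auto simp: bB_def tp_def blockcond_def)
      ultimately show ?thesis unfolding x by simp
    qed
    show "(\<lambda>(A,B). ((ul r A, tp r B), (ur r k A, lr r k A))) ((\<lambda>((A1,B1),(A2,A3)). (bA r k A1 A2 A3, bB r k m B1)) y) = y"
      if "y \<in> ?Y" for y
    proof -
      obtain A1 B1 A2 A3 where y: "y = ((A1,B1),(A2,A3))" by (metis prod.collapse)
      have A1: "A1 \<in> carrier_mat r r" and B1: "B1 \<in> carrier_mat r m"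
        and A2: "A2 \<in> carrier_mat r (k - r)" and A3: "A3 \<in> carrier_mat (k - r) (k - r)"
        using that unfolding reachset_def y by auto
      have "ul r (bA r k A1 A2 A3) = A1" using A1 r by (intro eq_matI) (auto simp: ul_def bA_def)
      moreover have "tp r (bB r k m B1) = B1" using B1 r by (intro eq_matI) (auto simp: tp_def bB_def)
      moreover have "ur r k (bA r k A1 A2 A3) = A2" using A2 r by (intro eq_matI) (auto simp: ur_def bA_def)
      moreover have "lr r k (bA r k A1 A2 A3) = A3" using A3 r by (intro eq_matI) (auto simp: lr_def bA_def)
      ultimately show ?thesis unfolding y by simp
    qed
  qed
  have "card ?X = card ?Y" by (rule bij_betw_same_card[OF bij])
  also have "\<dots> = card (reachset r m :: ('a mat \<times> 'a mat) set) * (?q ^ (r * (k - r)) * ?q ^ ((k - r) * (k - r)))"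
    by (simp add: card_cartesian_product card_carrier_mat')
  also have "?q ^ (r * (k - r)) * ?q ^ ((k - r) * (k - r)) = ?q ^ (k * (k - r))"
  proof -
    have "r * (k - r) + (k - r) * (k - r) = k * (k - r)" using r by (simp add: add_mult_distrib[symmetric])
    thus ?thesis by (simp add: power_add[symmetric])
  qed
  finally show ?thesis by simp
qed


lemma GL_card_SPAN_take: fixes Q :: "'a::{finite,field} mat"
  assumes Q: "Q \<in> GL k" and r: "r \<le> k"
  shows "card (SPAN k (set (take r (cols Q)))) = card (UNIV :: 'a set) ^ r"
proof -
  have Qc: "Q \<in> carrier_mat k k" using Q unfolding GL_def by auto
  have "indep k (cols Q)" using GL_indep[OF Qc] Q by simp
  from card_SPAN_indep'[OF indep_take[OF this, of r]] show ?thesis using Qc r by (simp add: min_def)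
qed

lemma mat_conj_cancel: fixes P Q A :: "'a::field mat" assumes P: "P \<in> carrier_mat k k" and Q: "Q \<in> carrier_mat k k" and A: "A \<in> carrier_mat k k"
  and PQ: "P * Q = 1\<^sub>m k" shows "P * (Q * A * P) * Q = A"
proof -
  have "P * (Q * A * P) * Q = (P * Q) * A * (P * Q)" using P A Q
    by (simp add: assoc_mult_mat[of _ k k _ k _ k])
  thus ?thesis using PQ A by simp
qed

lemma mat_left_cancel: fixes P Q B :: "'a::field mat" assumes P: "P \<in> carrier_mat k k" and Q: "Q \<in> carrier_mat k k" and B: "B \<in> carrier_mat k m"
  and PQ: "P * Q = 1\<^sub>m k" shows "P * (Q * B) = B"
  using PQ P Q B by (simp add: assoc_mult_mat[symmetric, of _ k k _ k _ m])

lemma count_fixedQ: fixes Q :: "'a::{finite,field} mat" assumes Q: "Q \<in> GL k" and r: "r \<le> k"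
  shows "card {(A :: 'a mat, B). A \<in> carrier_mat k k \<and> B \<in> carrier_mat k m \<and> Rset A B = SPAN k (set (take r (cols Q)))}
       = card {(A :: 'a mat, B). A \<in> carrier_mat k k \<and> B \<in> carrier_mat k m \<and> Rset A B = E r k}"
proof -
  have Qc: "Q \<in> carrier_mat k k" using Q unfolding GL_def by auto
  obtain P where P: "P \<in> carrier_mat k k" and PQ: "P * Q = 1\<^sub>m k" and QP: "Q * P = 1\<^sub>m k"
    using GL_inverse[OF Q] by blast
  have sp: "SPAN k (set (take r (cols Q))) = (\<lambda>x. Q *\<^sub>v x) ` E r k" using image_E[OF Qc r] by simp
  have PQv: "P *\<^sub>v (Q *\<^sub>v x) = x" if "x \<in> carrier_vec k" for x
    using that P Qc PQ by (metis assoc_mult_mat_vec one_mult_mat_vec)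
  have QPv: "Q *\<^sub>v (P *\<^sub>v x) = x" if "x \<in> carrier_vec k" for x
    using that P Qc QP by (metis assoc_mult_mat_vec one_mult_mat_vec)
  have Ec: "E r k \<subseteq> carrier_vec k" unfolding E_def by auto
  have PE: "(\<lambda>x. P *\<^sub>v x) ` ((\<lambda>x. Q *\<^sub>v x) ` E r k) = E r k"
  proof -
    have "(\<lambda>x. P *\<^sub>v (Q *\<^sub>v x)) ` E r k = (\<lambda>x. x) ` E r k" by (rule image_cong) (use PQv Ec in auto)
    thus ?thesis unfolding image_image by simp
  qed
  let ?X1 = "{(A :: 'a mat, B). A \<in> carrier_mat k k \<and> B \<in> carrier_mat k m \<and> Rset A B = SPAN k (set (take r (cols Q)))}"
  let ?X2 = "{(A :: 'a mat, B). A \<in> carrier_mat k k \<and> B \<in> carrier_mat k m \<and> Rset A B = E r k}"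
  show ?thesis
  proof (rule bij_betw_same_card[where f = "\<lambda>(A,B). (P * A * Q, P * B)"], rule bij_betwI[where g = "\<lambda>(A,B). (Q * A * P, Q * B)"])
    show "(\<lambda>(A,B). (P * A * Q, P * B)) \<in> ?X1
      \<rightarrow> ?X2"
    proof (clarify)
      fix A B :: "'a mat" assume A: "A \<in> carrier_mat k k" and B: "B \<in> carrier_mat k m" and R: "Rset A B = SPAN k (set (take r (cols Q)))"
      have "Rset (P * A * Q) (P * B) = (\<lambda>x. P *\<^sub>v x) ` Rset A B" by (rule Rset_conj[OF A B P Qc QP PQ])
      also have "\<dots> = E r k" unfolding R sp PE ..
      finally show "P * A * Q \<in> carrier_mat k k \<and> P * B \<in> carrier_mat k m \<and> Rset (P * A * Q) (P * B) = E r k"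
        using A B P Qc by auto
    qed
    show "(\<lambda>(A,B). (Q * A * P, Q * B)) \<in> ?X2
      \<rightarrow> ?X1"
    proof (clarify)
      fix A B :: "'a mat" assume A: "A \<in> carrier_mat k k" and B: "B \<in> carrier_mat k m" and R: "Rset A B = E r k"
      have "Rset (Q * A * P) (Q * B) = (\<lambda>x. Q *\<^sub>v x) ` Rset A B" by (rule Rset_conj[OF A B Qc P PQ QP])
      also have "\<dots> = SPAN k (set (take r (cols Q)))" unfolding R sp ..
      finally show "Q * A * P \<in> carrier_mat k k \<and> Q * B \<in> carrier_mat k m \<and> Rset (Q * A * P) (Q * B) = SPAN k (set (take r (cols Q)))"
        using A B P Qc by auto
    qed
    show "(\<lambda>(A,B). (Q * A * P, Q * B)) ((\<lambda>(A,B). (P * A * Q, P * B)) x) = x"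
      if "x \<in> ?X1" for x
      using that mat_conj_cancel[OF Qc P _ QP] mat_left_cancel[OF Qc P _ QP] by auto
    show "(\<lambda>(A,B). (P * A * Q, P * B)) ((\<lambda>(A,B). (Q * A * P, Q * B)) y) = y"
      if "y \<in> ?X2" for y
      using that mat_conj_cancel[OF P Qc _ PQ] mat_left_cancel[OF P Qc _ PQ] by auto
  qed
qed

lemma set_pair_eq: "{p \<in> X \<times> Y. P (fst p) (snd p)} = {(a,b). a \<in> X \<and> b \<in> Y \<and> P a b}" by auto

lemma Sigma_swap_eq: "Sigma B (\<lambda>b. {a \<in> A. R a b}) = (\<lambda>(a,b). (b,a)) ` Sigma A (\<lambda>a. {b \<in> B. R a b})"
  by auto

lemma double_count: fixes k m r :: nat assumes r: "r \<le> k"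
  shows "card {(A :: 'a::{finite,field} mat, B). A \<in> carrier_mat k k \<and> B \<in> carrier_mat k m \<and> card (Rset A B) = card (UNIV :: 'a set) ^ r}
       * ((\<Prod>i<r. card (UNIV :: 'a set) ^ r - card (UNIV :: 'a set) ^ i) * (\<Prod>i\<in>{r..<k}. card (UNIV :: 'a set) ^ k - card (UNIV :: 'a set) ^ i))
     = (\<Prod>i<k. card (UNIV :: 'a set) ^ k - card (UNIV :: 'a set) ^ i) * (card (UNIV :: 'a set) ^ (k * (k - r)) * card (reachset r m :: ('a mat \<times> 'a mat) set))"
proof -
  let ?q = "card (UNIV :: 'a set)"
  let ?G = "(\<Prod>i<r. ?q ^ r - ?q ^ i) * (\<Prod>i\<in>{r..<k}. ?q ^ k - ?q ^ i)"
  let ?N = "?q ^ (k * (k - r)) * card (reachset r m :: ('a mat \<times> 'a mat) set)"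
  let ?C = "(carrier_mat k k :: 'a mat set) \<times> (carrier_mat k m :: 'a mat set)"
  let ?Rl = "\<lambda>(p :: 'a mat \<times> 'a mat) Q. Rset (fst p) (snd p) = SPAN k (set (take r (cols Q)))"
  let ?S1 = "Sigma ?C (\<lambda>p. {Q \<in> GL k. ?Rl p Q})"
  let ?S2 = "Sigma (GL k) (\<lambda>Q. {p \<in> ?C. ?Rl p Q})"
  have finC: "finite ?C" by simp
  have finGL: "finite (GL k :: 'a mat set)" by (rule finite_subset[of _ "carrier_mat k k"]) (auto simp: GL_def)
  have h1: "card ?S1 = (\<Sum>p\<in>?C. card {Q \<in> GL k. ?Rl p Q})"
    by (rule card_SigmaI[OF finC]) (use finGL in auto)
  have h2: "card {Q \<in> GL k. ?Rl p Q} = (if card (Rset (fst p) (snd p)) = ?q ^ r then ?G else 0)" if p: "p \<in> ?C" for p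
  proof (cases "card (Rset (fst p) (snd p)) = ?q ^ r")
    case True
    have A: "fst p \<in> carrier_mat k k" and B: "snd p \<in> carrier_mat k m" using p by auto
    have "{Q \<in> GL k. ?Rl p Q} = {Q \<in> GL k. SPAN k (set (take r (cols Q))) = Rset (fst p) (snd p)}" by auto
    also have "card \<dots> = ?G" by (rule count_GL_span[OF Rset_props(1)[OF A B] True r])
    finally show ?thesis using True by simp
  next
    case False
    have "\<not> ?Rl p Q" if "Q \<in> GL k" for Q using GL_card_SPAN_take[OF that r] False by auto
    hence E0: "{Q \<in> GL k. ?Rl p Q} = {}" by blast
    show ?thesis unfolding E0 using False by simp
  qed
  have h3: "(\<Sum>p\<in>?C. card {Q \<in> GL k. ?Rl p Q}) = card {p \<in> ?C. card (Rset (fst p) (snd p)) = ?q ^ r} * ?G"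
  proof -
    have "(\<Sum>p\<in>?C. card {Q \<in> GL k. ?Rl p Q}) = (\<Sum>p\<in>?C. if card (Rset (fst p) (snd p)) = ?q ^ r then ?G else 0)"
      by (rule sum.cong) (use h2 in auto)
    also have "\<dots> = (\<Sum>p\<in>{p \<in> ?C. card (Rset (fst p) (snd p)) = ?q ^ r}. ?G)"
      by (rule sum.mono_neutral_cong_right) (use finC in auto)
    finally show ?thesis by simp
  qed
  have h4: "card ?S2 = card (GL k :: 'a mat set) * ?N"
  proof -
    have "card ?S2 = (\<Sum>Q\<in>GL k. card {p \<in> ?C. ?Rl p Q})"
      by (rule card_SigmaI[OF finGL]) (use finC in auto)
    also have "\<dots> = (\<Sum>Q\<in>(GL k :: 'a mat set). ?N)"
    proof (rule sum.cong)
      fix Q :: "'a mat" assume Q: "Q \<in> GL k"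
      have "{p \<in> ?C. ?Rl p Q} = {(A :: 'a mat, B). A \<in> carrier_mat k k \<and> B \<in> carrier_mat k m \<and> Rset A B = SPAN k (set (take r (cols Q)))}"
        by (rule set_pair_eq)
      thus "card {p \<in> ?C. ?Rl p Q} = ?N" using count_fixedQ[OF Q r, of m] count_block[OF r, of m] by simp
    qed simp
    finally show ?thesis by simp
  qed
  have h5: "card ?S1 = card ?S2"
  proof -
    have "?S2 = (\<lambda>(p,Q). (Q,p)) ` ?S1" by (rule Sigma_swap_eq)
    moreover have "inj_on (\<lambda>(p :: 'a mat \<times> 'a mat, Q :: 'a mat). (Q,p)) ?S1" by (auto simp: inj_on_def)
    ultimately show ?thesis by (simp add: card_image)
  qed
  have eqX: "{p \<in> ?C. card (Rset (fst p) (snd p)) = ?q ^ r} = {(A :: 'a mat, B). A \<in> carrier_mat k k \<and> B \<in> carrier_mat k m \<and> card (Rset A B) = ?q ^ r}"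
    by (rule set_pair_eq)
  show ?thesis using h1 h3 h4 h5 card_GL[of k, where 'a='a] eqX by simp
qed


definition gens :: "'a::field mat \<Rightarrow> 'a mat \<Rightarrow> nat \<Rightarrow> 'a vec list" where
  "gens A B t = concat (map (\<lambda>j. cols (A ^\<^sub>m j * B)) [0..<t])"

lemma set_gens: assumes A: "A \<in> carrier_mat k k" and B: "B \<in> carrier_mat k m"
  shows "set (gens A B t) = {A ^\<^sub>m j *\<^sub>v col B i | j i. j < t \<and> i < m}"
proof -
  have "set (gens A B t) = (\<Union>j\<in>{0..<t}. set (cols (A ^\<^sub>m j * B)))" unfolding gens_def by auto
  also have "\<dots> = {A ^\<^sub>m j *\<^sub>v col B i | j i. j < t \<and> i < m}"
  proof -
    have cs: "set (cols (A ^\<^sub>m j * B)) = {A ^\<^sub>m j *\<^sub>v col B i | i. i < m}" for j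
      using A B by (auto simp: cols_def col_mult2[of _ k k _ m])
    show ?thesis unfolding cs by fastforce
  qed
  finally show ?thesis .
qed

lemma gens_carrier: assumes A: "A \<in> carrier_mat k k" and B: "B \<in> carrier_mat k m"
  shows "set (gens A B t) \<subseteq> carrier_vec k"
  unfolding set_gens[OF A B] using A B by (auto intro!: mult_mat_vec_carrier[of _ k k])

lemma pow_comm: assumes A: "A \<in> carrier_mat k k" shows "A * A ^\<^sub>m j = A ^\<^sub>m j * A"
proof (induction j)
  case 0 thus ?case using A by simp
next
  case (Suc j)
  have "A * A ^\<^sub>m Suc j = (A * A ^\<^sub>m j) * A" using A by (simp add: assoc_mult_mat[symmetric, of _ k k _ k _ k])
  also have "\<dots> = (A ^\<^sub>m j * A) * A" using Suc by simp
  finally show ?case by simp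
qed

lemma pow_Suc_vec: assumes A: "A \<in> carrier_mat k k" and v: "v \<in> carrier_vec k"
  shows "A *\<^sub>v (A ^\<^sub>m j *\<^sub>v v) = A ^\<^sub>m (Suc j) *\<^sub>v v"
proof -
  have "A *\<^sub>v (A ^\<^sub>m j *\<^sub>v v) = (A * A ^\<^sub>m j) *\<^sub>v v"
    by (rule assoc_mult_mat_vec[symmetric, of A k k "A ^\<^sub>m j" k v]) (use A v in auto)
  thus ?thesis using pow_comm[OF A] by simp
qed

lemma pow_in_Rset: assumes A: "A \<in> carrier_mat k k" and B: "B \<in> carrier_mat k m"
  shows "v \<in> Rset A B \<Longrightarrow> A ^\<^sub>m j *\<^sub>v v \<in> Rset A B"
proof (induction j)
  case 0
  have "v \<in> carrier_vec k" using 0 Rset_carrier[OF A B] by auto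
  thus ?case using 0 A by simp
next
  case (Suc j)
  have "v \<in> carrier_vec k" using Suc Rset_carrier[OF A B] by auto
  hence "A ^\<^sub>m Suc j *\<^sub>v v = A *\<^sub>v (A ^\<^sub>m j *\<^sub>v v)" using pow_Suc_vec[OF A] by simp
  thus ?case using Rset_props(3)[OF A B Suc.IH[OF Suc.prems]] by simp
qed

lemma colsp_Rset_gens: fixes A :: "'a::{finite,field} mat" assumes A: "A \<in> carrier_mat k k" and B: "B \<in> carrier_mat k m"
  shows "Rset A B = SPAN k (set (gens A B k))"
proof
  have gc: "set (gens A B t) \<subseteq> carrier_vec k" for t by (rule gens_carrier[OF A B])
  show "SPAN k (set (gens A B k)) \<subseteq> Rset A B"
  proof (rule SPAN_least[OF Rset_props(1)[OF A B]])
    show "set (gens A B k) \<subseteq> Rset A B"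
    proof
      fix x assume "x \<in> set (gens A B k)"
      then obtain j i where x: "x = A ^\<^sub>m j *\<^sub>v col B i" "i < m" unfolding set_gens[OF A B] by auto
      have "col B i \<in> Rset A B" using Rset_props(2)[OF A B] col_in_colsp[OF B x(2)] by auto
      thus "x \<in> Rset A B" using pow_in_Rset[OF A B] x by auto
    qed
  qed
  define K where "K t = SPAN k (set (gens A B t))" for t
  have Ksub: "subsp k (K t)" for t unfolding K_def by (rule SPAN_subsp[OF gc])
  have Kmono: "K s \<subseteq> K t" if "s \<le> t" for s t
    unfolding K_def by (rule SPAN_mono[OF _ gc]) (use that in \<open>unfold set_gens[OF A B], fastforce intro: less_le_trans\<close>)
  have KB: "colsp B \<subseteq> K (Suc t)" for t
  proof -
    have "col B i \<in> K (Suc t)" if "i < m" for i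
    proof -
      have "col B i = A ^\<^sub>m 0 *\<^sub>v col B i" using A B that by simp
      hence "col B i \<in> set (gens A B (Suc t))" unfolding set_gens[OF A B] using that by blast
      thus ?thesis unfolding K_def using SPAN_sup by blast
    qed
    thus ?thesis by (intro colsp_least[OF B Ksub])
  qed
  have KA: "A *\<^sub>v x \<in> K (Suc t)" if "x \<in> K t" for x t
  proof -
    let ?W = "{x \<in> carrier_vec k. A *\<^sub>v x \<in> K (Suc t)}"
    have "subsp k ?W" unfolding subsp_def
    proof (intro conjI ballI allI)
      show "?W \<subseteq> carrier_vec k" by auto
      have "A *\<^sub>v 0\<^sub>v k = 0\<^sub>v k" using A by (intro eq_vecI) (auto simp: scalar_prod_def)
      thus "0\<^sub>v k \<in> ?W" using subspD(2)[OF Ksub] by simp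
    next
      fix x y assume "x \<in> ?W" "y \<in> ?W"
      thus "x + y \<in> ?W" using subspD(3)[OF Ksub] A by (simp add: mult_add_distrib_mat_vec)
    next
      fix c x assume "x \<in> ?W"
      thus "c \<cdot>\<^sub>v x \<in> ?W" using subspD(4)[OF Ksub] A by (simp add: mult_mat_vec)
    qed
    moreover have "set (gens A B t) \<subseteq> ?W"
    proof
      fix x assume "x \<in> set (gens A B t)"
      then obtain j i where x: "x = A ^\<^sub>m j *\<^sub>v col B i" "j < t" "i < m" unfolding set_gens[OF A B] by auto
      have cB: "col B i \<in> carrier_vec k" using B x(3) by simp
      have "A *\<^sub>v x = A ^\<^sub>m Suc j *\<^sub>v col B i" using pow_Suc_vec[OF A cB] x by simp
      hence "A *\<^sub>v x \<in> set (gens A B (Suc t))" unfolding set_gens[OF A B] using x by blast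
      hence "A *\<^sub>v x \<in> K (Suc t)" unfolding K_def using SPAN_sup by blast
      thus "x \<in> ?W" using x mult_mat_vec_carrier[OF pow_carrier_mat[OF A] cB] by simp
    qed
    ultimately have "K t \<subseteq> ?W" unfolding K_def by (rule SPAN_least)
    thus ?thesis using that by auto
  qed
  let ?q = "card (UNIV :: 'a set)"
  have q2: "?q \<ge> 2" by (rule card_field_ge2)
  have dex: "\<exists>d. card (K t) = ?q ^ d \<and> d \<le> k" for t
  proof -
    let ?M = "mat_of_cols k (gens A B t)"
    have Mc: "?M \<in> carrier_mat k (length (gens A B t))" by simp
    have cM: "cols ?M = gens A B t" using gc by (intro cols_mat_of_cols) auto
    have "K t = colsp ?M" unfolding K_def colsp_SPAN[OF Mc] cM ..
    hence ck: "card (K t) = ?q ^ vec_space.rank k ?M" using card_colsp_rank[OF Mc] by simp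
    have "K t \<subseteq> carrier_vec k" using subspD(1)[OF Ksub] .
    hence "card (K t) \<le> ?q ^ k" using card_mono[OF finite_carrier_vec'] card_carrier_vec' by metis
    hence "vec_space.rank k ?M \<le> k" using ck q2 by (metis power_le_imp_le_exp Suc_1 Suc_le_lessD)
    thus ?thesis using ck by blast
  qed
  have "\<exists>t\<le>k. K t = K (Suc t)"
  proof (rule ccontr)
    assume "\<not> ?thesis"
    hence ne: "K t \<noteq> K (Suc t)" if "t \<le> k" for t using that by blast
    have "\<exists>d. card (K t) = ?q ^ d \<and> d \<ge> t" if "t \<le> Suc k" for t
      using that
    proof (induction t)
      case 0 thus ?case using dex[of 0] by auto
    next
      case (Suc t)
      obtain d where d: "card (K t) = ?q ^ d" "d \<ge> t" using Suc by auto
      obtain d' where d': "card (K (Suc t)) = ?q ^ d'" using dex by blast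
      have "K t \<subset> K (Suc t)" using Kmono[of t "Suc t"] ne[of t] Suc.prems by auto
      moreover have "finite (K (Suc t))" using subspD(1)[OF Ksub] finite_subset finite_carrier_vec' by metis
      ultimately have "card (K t) < card (K (Suc t))" by (rule psubset_card_mono[rotated])
      hence "?q ^ d < ?q ^ d'" using d d' by simp
      hence "d < d'" using q2 by (simp add: power_strict_increasing_iff)
      thus ?case using d d' by auto
    qed
    from this[of "Suc k"] obtain d where "card (K (Suc k)) = ?q ^ d" "d \<ge> Suc k" by auto
    moreover obtain d' where "card (K (Suc k)) = ?q ^ d'" "d' \<le> k" using dex by blast
    ultimately show False using q2 by (metis not_less_eq_eq power_inject_exp Suc_1 Suc_le_lessD)
  qed
  then obtain t where t: "t \<le> k" "K t = K (Suc t)" by blast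
  have "Rset A B \<subseteq> K t"
  proof (rule Rset_least[OF A Ksub])
    show "colsp B \<subseteq> K t" using KB[of t] t by simp
    show "A *\<^sub>v x \<in> K t" if "x \<in> K t" for x using KA[OF that] t by simp
  qed
  also have "\<dots> \<subseteq> K k" by (rule Kmono[OF t(1)])
  finally show "Rset A B \<subseteq> SPAN k (set (gens A B k))" unfolding K_def .
qed

lemma rank_reach_iff: fixes A :: "'a::{finite,field} mat"
  assumes A: "A \<in> carrier_mat k k" and B: "B \<in> carrier_mat k m"
  shows "vec_space.rank k (reach_mat A B) = r \<longleftrightarrow> card (Rset A B) = card (UNIV::'a set) ^ r"
proof -
  let ?M = "reach_mat A B"
  have M: "?M = mat_of_cols k (gens A B k)" unfolding reach_mat_def gens_def using A by simp
  have Mc: "?M \<in> carrier_mat k (length (gens A B k))" unfolding M by simp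
  have cM: "cols ?M = gens A B k" unfolding M using gens_carrier[OF A B] by (intro cols_mat_of_cols) auto
  have "colsp ?M = Rset A B" unfolding colsp_SPAN[OF Mc] cM colsp_Rset_gens[OF A B] ..
  hence "card (Rset A B) = card (UNIV::'a set) ^ vec_space.rank k ?M" using card_colsp_rank[OF Mc] by simp
  moreover have "card (UNIV::'a set) \<ge> 2" by (rule card_field_ge2)
  ultimately show ?thesis by (metis power_inject_exp Suc_1 Suc_le_lessD)
qed


definition gb :: "rat \<Rightarrow> nat \<Rightarrow> nat \<Rightarrow> rat" where
  "gb Q k r = (\<Prod>i<r. (Q ^ (k - i) - 1) / (Q ^ (i + 1) - 1))"

lemma gb_0[simp]: "gb Q k 0 = 1" by (simp add: gb_def)

lemma gb_Suc: "gb Q k (Suc j) = gb Q k j * ((Q ^ (k - j) - 1) / (Q ^ (j + 1) - 1))"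
  by (simp add: gb_def)

lemma gb_zero: "k < j \<Longrightarrow> gb Q k j = 0"
  unfolding gb_def by (intro prod_zero) (auto intro!: bexI[where x=k])

lemma pow_ge2: assumes "(Q::rat) \<ge> 2" "n \<ge> 1" shows "Q ^ n \<ge> 2"
proof -
  have "Q \<le> Q ^ n" by (rule self_le_power) (use assms in auto)
  thus ?thesis using assms by simp
qed

lemma pow_m1_ne0: assumes "(Q::rat) \<ge> 2" "n \<ge> 1" shows "Q ^ n - 1 \<noteq> 0"
  using pow_ge2[OF assms] by simp

lemma gb_self: assumes "Q \<ge> 2" shows "gb Q k k = 1"
proof -
  have "gb Q k k = (\<Prod>i<k. (Q ^ (k - i) - 1)) / (\<Prod>i<k. (Q ^ (i + 1) - 1))"
    unfolding gb_def by (rule prod_dividef)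
  also have "(\<Prod>i<k. (Q ^ (k - i) - 1)) = (\<Prod>i<k. (Q ^ (i + 1) - 1))"
    by (rule prod.reindex_bij_witness[where i = "\<lambda>i. k - 1 - i" and j = "\<lambda>i. k - 1 - i"]) (auto simp: power_Suc[symmetric] Suc_diff_Suc)
  also have "(\<Prod>i<k. (Q ^ (i + 1) - 1)) \<noteq> 0"
  proof -
    have h: "Q ^ (i + 1) - 1 \<noteq> 0" for i by (rule pow_m1_ne0[OF assms]) simp
    show ?thesis using h by (simp only: prod_zero_iff[OF finite_lessThan]) blast
  qed
  ultimately show ?thesis by simp
qed

lemma gb_Suc_Suc: assumes Q: "Q \<ge> 2"
  shows "gb Q (Suc k) (Suc j) = gb Q k j * ((Q ^ Suc k - 1) / (Q ^ Suc j - 1))"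
proof (induction j)
  case 0 thus ?case by (simp add: gb_def)
next
  case (Suc j)
  have "gb Q (Suc k) (Suc (Suc j)) = gb Q (Suc k) (Suc j) * ((Q ^ (k - j) - 1) / (Q ^ (Suc j + 1) - 1))"
    by (simp add: gb_Suc)
  also have "\<dots> = gb Q k j * ((Q ^ Suc k - 1) / (Q ^ Suc j - 1)) * ((Q ^ (k - j) - 1) / (Q ^ (Suc j + 1) - 1))"
    using Suc by simp
  also have "\<dots> = gb Q k j * ((Q ^ (k - j) - 1) / (Q ^ (j + 1) - 1)) * ((Q ^ Suc k - 1) / (Q ^ Suc (Suc j) - 1))"
    by simp
  also have "\<dots> = gb Q k (Suc j) * ((Q ^ Suc k - 1) / (Q ^ Suc (Suc j) - 1))" by (simp add: gb_Suc)
  finally show ?case .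
qed

lemma gb_pascal: assumes Q: "Q \<ge> 2"
  shows "gb Q (Suc k) (Suc j) = gb Q k j + Q ^ Suc j * gb Q k (Suc j)"
proof (cases "j \<le> k")
  case True
  have ne: "Q ^ Suc j - 1 \<noteq> 0" by (rule pow_m1_ne0[OF Q]) simp
  have e: "Q ^ Suc k - 1 = (Q ^ Suc j - 1) + Q ^ Suc j * (Q ^ (k - j) - 1)"
  proof -
    have "Suc j + (k - j) = Suc k" using True by simp
    hence "Q ^ Suc j * Q ^ (k - j) = Q ^ Suc k" by (metis power_add)
    thus ?thesis by (auto simp: algebra_simps)
  qed
  have "gb Q (Suc k) (Suc j) = gb Q k j * ((Q ^ Suc j - 1) + Q ^ Suc j * (Q ^ (k - j) - 1)) / (Q ^ Suc j - 1)"
    unfolding gb_Suc_Suc[OF Q] e by simp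
  also have "\<dots> = gb Q k j + Q ^ Suc j * (gb Q k j * ((Q ^ (k - j) - 1) / (Q ^ (j + 1) - 1)))"
    using ne by (simp add: field_simps)
  also have "\<dots> = gb Q k j + Q ^ Suc j * gb Q k (Suc j)" by (simp add: gb_Suc)
  finally show ?thesis .
next
  case False
  thus ?thesis using gb_zero[of k "Suc j" Q] gb_zero[of k j Q] gb_zero[of "Suc k" "Suc j" Q] by simp
qed

definition Tt :: "rat \<Rightarrow> nat \<Rightarrow> rat \<Rightarrow> nat \<Rightarrow> rat" where
  "Tt Q k x j = gb Q k j * Q ^ ((k - j)^2) * (\<Prod>t<j. x - Q ^ (k - t))"

lemma gb_pascal_gen: assumes Q: "Q \<ge> 2"
  shows "gb Q (Suc k) j = (case j of 0 \<Rightarrow> 0 | Suc j' \<Rightarrow> gb Q k j') + Q ^ j * gb Q k j"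
  by (cases j) (simp_all add: gb_pascal[OF Q])

lemma Fid: assumes Q: "Q \<ge> 2" shows "(\<Sum>j\<le>k. Tt Q k x j) = x ^ k"
proof (induction k arbitrary: x)
  case 0 thus ?case by (simp add: Tt_def)
next
  case (Suc k)
  define W where "W j = Q ^ ((Suc k - j)^2) * (\<Prod>t<j. x - Q ^ (Suc k - t))" for j
  define gm where "gm j = (case j of 0 \<Rightarrow> 0 | Suc j' \<Rightarrow> gb Q k j')" for j
  have split: "Tt Q (Suc k) x j = gm j * W j + Q ^ j * gb Q k j * W j" for j
    unfolding Tt_def W_def gm_def gb_pascal_gen[OF Q] by (simp add: algebra_simps)
  have S1: "(\<Sum>j\<le>Suc k. gm j * W j) = (x - Q ^ Suc k) * (\<Sum>j\<le>k. Tt Q k x j)"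
  proof -
    have "(\<Sum>j\<le>Suc k. gm j * W j) = (\<Sum>j\<le>k. gb Q k j * W (Suc j))"
      by (subst sum.atMost_Suc_shift) (simp add: gm_def)
    also have "\<dots> = (\<Sum>j\<le>k. (x - Q ^ Suc k) * Tt Q k x j)"
    proof (rule sum.cong)
      fix j assume "j \<in> {..k}"
      have "(\<Prod>t<Suc j. x - Q ^ (Suc k - t)) = (x - Q ^ Suc k) * (\<Prod>t<j. x - Q ^ (k - t))"
        by (subst prod.lessThan_Suc_shift) simp
      thus "gb Q k j * W (Suc j) = (x - Q ^ Suc k) * Tt Q k x j"
        unfolding W_def Tt_def by simp
    qed simp
    finally show ?thesis by (simp add: sum_distrib_left)
  qed
  have S2: "(\<Sum>j\<le>Suc k. Q ^ j * gb Q k j * W j) = Q ^ (2 * k + 1) * (\<Sum>j\<le>k. Tt Q k (x / Q) j)"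
  proof -
    have "(\<Sum>j\<le>Suc k. Q ^ j * gb Q k j * W j) = (\<Sum>j\<le>k. Q ^ j * gb Q k j * W j)"
      using gb_zero[of k "Suc k" Q] by simp
    also have "\<dots> = (\<Sum>j\<le>k. Q ^ (2 * k + 1) * Tt Q k (x / Q) j)"
    proof (rule sum.cong)
      fix j assume j: "j \<in> {..k}"
      have Q0: "Q \<noteq> 0" using Q by auto
      have p: "(\<Prod>t<j. x - Q ^ (Suc k - t)) = Q ^ j * (\<Prod>t<j. x / Q - Q ^ (k - t))"
      proof -
        have "(\<Prod>t<j. x - Q ^ (Suc k - t)) = (\<Prod>t<j. Q * (x / Q - Q ^ (k - t)))"
        proof (rule prod.cong)
          fix t assume "t \<in> {..<j}"
          hence "Suc k - t = Suc (k - t)" using j by auto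
          thus "x - Q ^ (Suc k - t) = Q * (x / Q - Q ^ (k - t))" using Q0 by (simp add: field_simps)
        qed simp
        thus ?thesis by (simp add: prod.distrib)
      qed
      have e: "j + (Suc k - j)^2 + j = (k - j)^2 + (2 * k + 1)"
      proof -
        have "Suc k - j = Suc (k - j)" using j by auto
        moreover have "j + (k - j) = k" using j by auto
        ultimately show ?thesis by (simp add: power2_eq_square algebra_simps)
      qed
      have "Q ^ j * gb Q k j * W j = gb Q k j * Q ^ (j + (Suc k - j)^2 + j) * (\<Prod>t<j. x / Q - Q ^ (k - t))"
        unfolding W_def p by (simp add: power_add algebra_simps)
      also have "\<dots> = Q ^ (2 * k + 1) * Tt Q k (x / Q) j" unfolding e Tt_def by (simp add: power_add algebra_simps)
      finally show "Q ^ j * gb Q k j * W j = Q ^ (2 * k + 1) * Tt Q k (x / Q) j" .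
    qed simp
    finally show ?thesis by (simp add: sum_distrib_left)
  qed
  have "(\<Sum>j\<le>Suc k. Tt Q (Suc k) x j) = (x - Q ^ Suc k) * x ^ k + Q ^ (2 * k + 1) * (x / Q) ^ k"
    unfolding split sum.distrib S1 S2 Suc.IH ..
  also have "\<dots> = x ^ Suc k"
  proof -
    have Q0: "Q \<noteq> 0" using Q by auto
    have "2 * k + 1 = Suc k + k" by simp
    hence a: "Q ^ (2 * k + 1) = Q ^ Suc k * Q ^ k" by (metis power_add)
    have "Q ^ k \<noteq> 0" using Q0 by simp
    hence "Q ^ (2 * k + 1) * (x / Q) ^ k = Q ^ Suc k * x ^ k"
      unfolding a power_divide by simp
    thus ?thesis by (simp add: algebra_simps)
  qed
  finally show ?case .
qed


lemma Rset_card_pow: fixes A :: "'a::{finite,field} mat"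
  assumes A: "A \<in> carrier_mat k k" and B: "B \<in> carrier_mat k m"
  shows "\<exists>d\<le>k. card (Rset A B) = card (UNIV::'a set) ^ d"
proof -
  let ?q = "card (UNIV::'a set)"
  let ?d = "vec_space.rank k (reach_mat A B)"
  have c: "card (Rset A B) = ?q ^ ?d" using rank_reach_iff[OF A B, of ?d] by simp
  have "card (Rset A B) \<le> ?q ^ k"
    using card_mono[OF finite_carrier_vec' Rset_carrier[OF A B]] card_carrier_vec' by metis
  hence "?d \<le> k" using c card_field_ge2[where 'a='a] by (metis power_le_imp_le_exp Suc_1 Suc_le_lessD)
  thus ?thesis using c by blast
qed

definition cnt :: "'a::{finite,field} itself \<Rightarrow> nat \<Rightarrow> nat \<Rightarrow> nat \<Rightarrow> nat" where
  "cnt ty k m r = card {(A :: 'a mat, B). A \<in> carrier_mat k k \<and> B \<in> carrier_mat k m \<and> card (Rset A B) = card (UNIV::'a set) ^ r}"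

lemma cnt_sum: "card (UNIV::'a::{finite,field} set) ^ (k * k + k * m) = (\<Sum>d\<le>k. cnt TYPE('a) k m d)"
proof -
  let ?q = "card (UNIV::'a set)"
  let ?C = "(carrier_mat k k :: 'a mat set) \<times> (carrier_mat k m :: 'a mat set)"
  let ?X = "\<lambda>d. {(A :: 'a mat, B). A \<in> carrier_mat k k \<and> B \<in> carrier_mat k m \<and> card (Rset A B) = ?q ^ d}"
  have q2: "?q \<ge> 2" by (rule card_field_ge2)
  have "?C = (\<Union>d\<in>{..k}. ?X d)"
  proof (intro equalityI subsetI)
    fix p assume "p \<in> ?C"
    then obtain A B where p: "p = (A,B)" "A \<in> carrier_mat k k" "B \<in> carrier_mat k m" by auto
    obtain d where "d \<le> k" "card (Rset A B) = ?q ^ d" using Rset_card_pow[OF p(2,3)] by blast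
    thus "p \<in> (\<Union>d\<in>{..k}. ?X d)" using p by auto
  qed auto
  hence "card ?C = card (\<Union>d\<in>{..k}. ?X d)" by simp
  also have "\<dots> = (\<Sum>d\<le>k. card (?X d))"
  proof (rule card_UN_disjoint)
    show "\<forall>i\<in>{..k}. finite (?X i)"
      by (auto intro: finite_subset[of _ "(carrier_mat k k :: 'a mat set) \<times> (carrier_mat k m :: 'a mat set)"])
    show "\<forall>i\<in>{..k}. \<forall>j\<in>{..k}. i \<noteq> j \<longrightarrow> ?X i \<inter> ?X j = {}"
      using q2 by (auto simp: power_inject_exp)
  qed simp
  finally have "card ?C = (\<Sum>d\<le>k. cnt TYPE('a) k m d)" unfolding cnt_def .
  moreover have "card ?C = ?q ^ (k * k + k * m)" by (simp add: card_cartesian_product card_carrier_mat' power_add)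
  ultimately show ?thesis by simp
qed

lemma of_nat_pow_diff: assumes "i \<le> j" "(q::nat) \<ge> 1"
  shows "(of_nat (q ^ j - q ^ i) :: rat) = of_nat q ^ j - of_nat q ^ i"
proof -
  have "q ^ i \<le> q ^ j" using assms by (simp add: power_increasing)
  thus ?thesis by (simp add: of_nat_diff)
qed

lemma pow_diff_ne0: assumes "(Q::rat) \<ge> 2" "i < j" shows "Q ^ j - Q ^ i \<noteq> 0"
proof -
  have "Q ^ i < Q ^ j" using assms by (intro power_strict_increasing) auto
  thus ?thesis by simp
qed

lemma ratio_gb: assumes Q: "(Q::rat) \<ge> 2" and r: "r \<le> k"
  shows "(\<Prod>i<r. Q ^ k - Q ^ i) = gb Q k r * (\<Prod>i<r. Q ^ r - Q ^ i)"
proof -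
  have Q0: "Q \<noteq> 0" using Q by auto
  have a: "(\<Prod>i<r. Q ^ k - Q ^ i) = (\<Prod>i<r. Q ^ i) * (\<Prod>i<r. Q ^ (k - i) - 1)"
  proof -
    have "(\<Prod>i<r. Q ^ k - Q ^ i) = (\<Prod>i<r. Q ^ i * (Q ^ (k - i) - 1))"
    proof (rule prod.cong)
      fix i assume "i \<in> {..<r}"
      hence "i + (k - i) = k" using r by auto
      hence "Q ^ k = Q ^ i * Q ^ (k - i)" by (metis power_add)
      thus "Q ^ k - Q ^ i = Q ^ i * (Q ^ (k - i) - 1)" by (simp add: algebra_simps)
    qed simp
    thus ?thesis by (simp add: prod.distrib)
  qed
  have b: "(\<Prod>i<r. Q ^ r - Q ^ i) = (\<Prod>i<r. Q ^ i) * (\<Prod>i<r. Q ^ (i + 1) - 1)"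
  proof -
    have "(\<Prod>i<r. Q ^ r - Q ^ i) = (\<Prod>i<r. Q ^ i * (Q ^ (r - i) - 1))"
    proof (rule prod.cong)
      fix i assume "i \<in> {..<r}"
      hence "i + (r - i) = r" by auto
      hence "Q ^ r = Q ^ i * Q ^ (r - i)" by (metis power_add)
      thus "Q ^ r - Q ^ i = Q ^ i * (Q ^ (r - i) - 1)" by (simp add: algebra_simps)
    qed simp
    also have "\<dots> = (\<Prod>i<r. Q ^ i) * (\<Prod>i<r. Q ^ (r - i) - 1)" by (simp add: prod.distrib)
    also have "(\<Prod>i<r. Q ^ (r - i) - 1) = (\<Prod>i<r. Q ^ (i + 1) - 1)"
      by (rule prod.reindex_bij_witness[where i = "\<lambda>i. r - 1 - i" and j = "\<lambda>i. r - 1 - i"])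
        (auto simp: Suc_diff_Suc)
    finally show ?thesis .
  qed
  have D: "(\<Prod>i<r. Q ^ (i + 1) - 1) \<noteq> 0"
  proof -
    have h: "Q ^ (i + 1) - 1 \<noteq> 0" for i by (rule pow_m1_ne0[OF Q]) simp
    show ?thesis using h by (simp only: prod_zero_iff[OF finite_lessThan]) blast
  qed
  have g: "gb Q k r = (\<Prod>i<r. Q ^ (k - i) - 1) / (\<Prod>i<r. Q ^ (i + 1) - 1)"
    unfolding gb_def by (rule prod_dividef)
  show ?thesis unfolding a b g using D by simp
qed

lemma cnt_formula: fixes k m r :: nat assumes r: "r \<le> k"
  shows "(of_nat (cnt TYPE('a::{finite,field}) k m r) :: rat)
     = gb (of_nat (card (UNIV::'a set))) k r * of_nat (card (UNIV::'a set)) ^ (k * (k - r))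
       * of_nat (card (reachset r m :: ('a mat \<times> 'a mat) set))"
proof -
  let ?q = "card (UNIV::'a set)"
  let ?Q = "(of_nat ?q :: rat)"
  have q2: "?q \<ge> 2" by (rule card_field_ge2)
  have Q2: "?Q \<ge> 2" using q2 by simp
  let ?c = "card (reachset r m :: ('a mat \<times> 'a mat) set)"
  have dc: "cnt TYPE('a) k m r * ((\<Prod>i<r. ?q ^ r - ?q ^ i) * (\<Prod>i\<in>{r..<k}. ?q ^ k - ?q ^ i))
     = (\<Prod>i<k. ?q ^ k - ?q ^ i) * (?q ^ (k * (k - r)) * ?c)"
    using double_count[OF r, of m, where 'a='a] unfolding cnt_def .
  have c1: "(of_nat (\<Prod>i<r. ?q ^ r - ?q ^ i) :: rat) = (\<Prod>i<r. ?Q ^ r - ?Q ^ i)"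
    unfolding of_nat_prod by (rule prod.cong) (use q2 in \<open>auto intro!: of_nat_pow_diff\<close>)
  have c2: "(of_nat (\<Prod>i\<in>{r..<k}. ?q ^ k - ?q ^ i) :: rat) = (\<Prod>i\<in>{r..<k}. ?Q ^ k - ?Q ^ i)"
    unfolding of_nat_prod by (rule prod.cong) (use q2 in \<open>auto intro!: of_nat_pow_diff\<close>)
  have c3: "(of_nat (\<Prod>i<k. ?q ^ k - ?q ^ i) :: rat) = (\<Prod>i<k. ?Q ^ k - ?Q ^ i)"
    unfolding of_nat_prod by (rule prod.cong) (use q2 in \<open>auto intro!: of_nat_pow_diff\<close>)
  have c4: "(\<Prod>i<k. ?Q ^ k - ?Q ^ i) = (\<Prod>i<r. ?Q ^ k - ?Q ^ i) * (\<Prod>i\<in>{r..<k}. ?Q ^ k - ?Q ^ i)"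
    using r by (simp add: lessThan_atLeast0 prod.atLeastLessThan_concat)
  have "(of_nat (cnt TYPE('a) k m r) :: rat) * ((\<Prod>i<r. ?Q ^ r - ?Q ^ i) * (\<Prod>i\<in>{r..<k}. ?Q ^ k - ?Q ^ i))
     = (\<Prod>i<k. ?Q ^ k - ?Q ^ i) * (?Q ^ (k * (k - r)) * of_nat ?c)"
    using arg_cong[OF dc, of "of_nat :: nat \<Rightarrow> rat"] unfolding of_nat_mult c1 c2 c3 of_nat_power .
  also have "\<dots> = (gb ?Q k r * ?Q ^ (k * (k - r)) * of_nat ?c) * ((\<Prod>i<r. ?Q ^ r - ?Q ^ i) * (\<Prod>i\<in>{r..<k}. ?Q ^ k - ?Q ^ i))"
    unfolding c4 ratio_gb[OF Q2 r] by (simp add: algebra_simps)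
  finally have e: "(of_nat (cnt TYPE('a) k m r) :: rat) * ((\<Prod>i<r. ?Q ^ r - ?Q ^ i) * (\<Prod>i\<in>{r..<k}. ?Q ^ k - ?Q ^ i))
     = (gb ?Q k r * ?Q ^ (k * (k - r)) * of_nat ?c) * ((\<Prod>i<r. ?Q ^ r - ?Q ^ i) * (\<Prod>i\<in>{r..<k}. ?Q ^ k - ?Q ^ i))" .
  have nz1: "(\<Prod>i<r. ?Q ^ r - ?Q ^ i) \<noteq> 0"
    using pow_diff_ne0[OF Q2] by (simp only: prod_zero_iff[OF finite_lessThan]) auto
  have nz2: "(\<Prod>i\<in>{r..<k}. ?Q ^ k - ?Q ^ i) \<noteq> 0"
    using pow_diff_ne0[OF Q2] by (simp only: prod_zero_iff[OF finite_atLeastLessThan]) auto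
  from e nz1 nz2 show ?thesis by simp
qed

lemma prodshift: fixes Q :: rat assumes d: "d \<le> r"
  shows "(\<Prod>t<d. Q ^ (r + m) - Q ^ (r - t)) = Q ^ ((r - d) * d) * (\<Prod>t<d. Q ^ (d + m) - Q ^ (d - t))"
proof -
  have "(\<Prod>t<d. Q ^ (r + m) - Q ^ (r - t)) = (\<Prod>t<d. Q ^ (r - d) * (Q ^ (d + m) - Q ^ (d - t)))"
  proof (rule prod.cong)
    fix t assume "t \<in> {..<d}"
    hence e1: "(r - d) + (d + m) = r + m" and e2: "(r - d) + (d - t) = r - t" using d by auto
    show "Q ^ (r + m) - Q ^ (r - t) = Q ^ (r - d) * (Q ^ (d + m) - Q ^ (d - t))"
      unfolding right_diff_distrib power_add[symmetric] e1 e2 ..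
  qed simp
  also have "\<dots> = (Q ^ (r - d)) ^ d * (\<Prod>t<d. Q ^ (d + m) - Q ^ (d - t))" by (simp add: prod.distrib)
  finally show ?thesis by (simp add: power_mult)
qed

lemma reach_formula: "(of_nat (card (reachset r m :: ('a::{finite,field} mat \<times> 'a mat) set)) :: rat)
   = (\<Prod>t<r. of_nat (card (UNIV::'a set)) ^ (r + m) - of_nat (card (UNIV::'a set)) ^ (r - t))"
proof (induction r rule: less_induct)
  case (less r)
  let ?Q = "(of_nat (card (UNIV::'a set)) :: rat)"
  let ?c = "\<lambda>d. (of_nat (card (reachset d m :: ('a mat \<times> 'a mat) set)) :: rat)"
  let ?P = "\<lambda>d. (\<Prod>t<d. ?Q ^ (d + m) - ?Q ^ (d - t))"
  have Q2: "?Q \<ge> 2" using card_field_ge2[where 'a='a] by simp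
  have s1: "?Q ^ (r * r + r * m) = (\<Sum>d\<le>r. gb ?Q r d * ?Q ^ (r * (r - d)) * ?c d)"
  proof -
    have "?Q ^ (r * r + r * m) = of_nat (\<Sum>d\<le>r. cnt TYPE('a) r m d)"
      using arg_cong[OF cnt_sum[of r m, where 'a='a], of "of_nat :: nat \<Rightarrow> rat"] by simp
    also have "\<dots> = (\<Sum>d\<le>r. gb ?Q r d * ?Q ^ (r * (r - d)) * ?c d)"
      unfolding of_nat_sum by (rule sum.cong) (auto simp: cnt_formula)
    finally show ?thesis .
  qed
  have s2: "?Q ^ (r * r + r * m) = (\<Sum>d\<le>r. gb ?Q r d * ?Q ^ (r * (r - d)) * ?P d)"
  proof -
    have "?Q ^ (r * r + r * m) = (?Q ^ (r + m)) ^ r" by (simp add: power_mult[symmetric] algebra_simps)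
    also have "\<dots> = (\<Sum>d\<le>r. Tt ?Q r (?Q ^ (r + m)) d)" by (rule Fid[OF Q2, symmetric])
    also have "\<dots> = (\<Sum>d\<le>r. gb ?Q r d * ?Q ^ (r * (r - d)) * ?P d)"
    proof (rule sum.cong)
      fix d assume "d \<in> {..r}" hence d: "d \<le> r" by simp
      have e: "(r - d)^2 + (r - d) * d = r * (r - d)"
      proof -
        have "r - d + d = r" using d by simp
        thus ?thesis by (metis power2_eq_square add_mult_distrib2 mult.commute)
      qed
      have "Tt ?Q r (?Q ^ (r + m)) d = gb ?Q r d * ?Q ^ ((r - d)^2) * (?Q ^ ((r - d) * d) * ?P d)"
        unfolding Tt_def prodshift[OF d] ..
      also have "\<dots> = gb ?Q r d * (?Q ^ ((r - d)^2) * ?Q ^ ((r - d) * d)) * ?P d" by (simp add: algebra_simps)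
      also have "?Q ^ ((r - d)^2) * ?Q ^ ((r - d) * d) = ?Q ^ (r * (r - d))" unfolding e[symmetric] power_add ..
      finally show "Tt ?Q r (?Q ^ (r + m)) d = gb ?Q r d * ?Q ^ (r * (r - d)) * ?P d" .
    qed simp
    finally show ?thesis .
  qed
  have IH: "?c d = ?P d" if "d < r" for d using less.IH[OF that] .
  have "(\<Sum>d\<le>r. gb ?Q r d * ?Q ^ (r * (r - d)) * ?c d) = (\<Sum>d\<le>r. gb ?Q r d * ?Q ^ (r * (r - d)) * ?P d)"
    using s1 s2 by simp
  hence "(\<Sum>d<r. gb ?Q r d * ?Q ^ (r * (r - d)) * ?c d) + gb ?Q r r * ?Q ^ (r * (r - r)) * ?c r
      = (\<Sum>d<r. gb ?Q r d * ?Q ^ (r * (r - d)) * ?P d) + gb ?Q r r * ?Q ^ (r * (r - r)) * ?P r"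
    by (simp add: lessThan_Suc_atMost[symmetric])
  moreover have "(\<Sum>d<r. gb ?Q r d * ?Q ^ (r * (r - d)) * ?c d) = (\<Sum>d<r. gb ?Q r d * ?Q ^ (r * (r - d)) * ?P d)"
    by (rule sum.cong) (auto simp: IH)
  ultimately have "gb ?Q r r * ?Q ^ (r * (r - r)) * ?c r = gb ?Q r r * ?Q ^ (r * (r - r)) * ?P r" by simp
  thus ?case using gb_self[OF Q2, of r] by simp
qed

lemma main_count: fixes n k r :: nat
  assumes kn: "k < n" and r: "r \<le> k"
  shows "of_nat (card {(A :: 'a::{finite,field} mat, B).
             A \<in> carrier_mat k k \<and> B \<in> carrier_mat k (n - k) \<and>
             vec_space.rank k (reach_mat A B) = r})
       = qbinom (card (UNIV :: 'a set)) k r * of_nat (card (UNIV :: 'a set)) ^ ((k - r)^2)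
         * (\<Prod>i\<in>{k - r + 1..k}. (of_nat (card (UNIV :: 'a set)) ^ n - of_nat (card (UNIV :: 'a set)) ^ i :: rat))"
proof -
  let ?q = "card (UNIV :: 'a set)"
  let ?Q = "(of_nat ?q :: rat)"
  define m where "m = n - k"
  have n: "n = k + m" using kn unfolding m_def by simp
  have seteq: "{(A :: 'a mat, B). A \<in> carrier_mat k k \<and> B \<in> carrier_mat k (n - k) \<and> vec_space.rank k (reach_mat A B) = r}
     = {(A :: 'a mat, B). A \<in> carrier_mat k k \<and> B \<in> carrier_mat k m \<and> card (Rset A B) = ?q ^ r}"
    unfolding m_def using rank_reach_iff by blast
  have "(of_nat (card {(A :: 'a mat, B). A \<in> carrier_mat k k \<and> B \<in> carrier_mat k (n - k) \<and> vec_space.rank k (reach_mat A B) = r}) :: rat)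
     = of_nat (cnt TYPE('a) k m r)" unfolding seteq cnt_def ..
  also have "\<dots> = gb ?Q k r * ?Q ^ (k * (k - r)) * (\<Prod>t<r. ?Q ^ (r + m) - ?Q ^ (r - t))"
    unfolding cnt_formula[OF r] reach_formula ..
  also have "\<dots> = gb ?Q k r * ?Q ^ ((k - r)^2) * (?Q ^ ((k - r) * r) * (\<Prod>t<r. ?Q ^ (r + m) - ?Q ^ (r - t)))"
  proof -
    have "k * (k - r) = (k - r)^2 + (k - r) * r"
    proof -
      have "k - r + r = k" using r by simp
      thus ?thesis by (metis power2_eq_square add_mult_distrib2 mult.commute)
    qed
    thus ?thesis by (simp add: power_add algebra_simps)
  qed
  also have "\<dots> = gb ?Q k r * ?Q ^ ((k - r)^2) * (\<Prod>t<r. ?Q ^ n - ?Q ^ (k - t))"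
    unfolding n prodshift[OF r, symmetric] ..
  also have "(\<Prod>t<r. ?Q ^ n - ?Q ^ (k - t)) = (\<Prod>i\<in>{k - r + 1..k}. ?Q ^ n - ?Q ^ i)"
    by (rule prod.reindex_bij_witness[where i = "\<lambda>i. k - i" and j = "\<lambda>t. k - t"]) (use r in auto)
  also have "gb ?Q k r = qbinom ?q k r" unfolding gb_def qbinom_def ..
  finally show ?thesis .
qed

theorem theorem4:
  fixes n k r :: nat
  assumes "1 \<le> k" and "k < n" and "r \<le> k"
  shows "of_nat (card {(A :: 'a::{finite,field} mat, B).
             A \<in> carrier_mat k k \<and> B \<in> carrier_mat k (n - k) \<and>
             vec_space.rank k (reach_mat A B) = r})
       = qbinom (card (UNIV :: 'a set)) k r * of_nat (card (UNIV :: 'a set)) ^ ((k - r)^2)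
         * (\<Prod>i\<in>{k - r + 1..k}. (of_nat (card (UNIV :: 'a set)) ^ n - of_nat (card (UNIV :: 'a set)) ^ i :: rat))
     \<and> of_nat (card {(A :: 'a mat, B).
             A \<in> carrier_mat k k \<and> B \<in> carrier_mat k (n - k) \<and>
             vec_space.rank k (reach_mat A B) = k})
       = (\<Prod>i\<in>{1..k}. (of_nat (card (UNIV :: 'a set)) ^ n - of_nat (card (UNIV :: 'a set)) ^ i :: rat))"
proof
  show "of_nat (card {(A :: 'a::{finite,field} mat, B).
             A \<in> carrier_mat k k \<and> B \<in> carrier_mat k (n - k) \<and>
             vec_space.rank k (reach_mat A B) = r})
       = qbinom (card (UNIV :: 'a set)) k r * of_nat (card (UNIV :: 'a set)) ^ ((k - r)^2)
         * (\<Prod>i\<in>{k - r + 1..k}. (of_nat (card (UNIV :: 'a set)) ^ n - of_nat (card (UNIV :: 'a set)) ^ i :: rat))"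
    by (rule main_count[OF assms(2,3)])
  have Q2: "(of_nat (card (UNIV :: 'a set)) :: rat) \<ge> 2" using card_field_ge2[where 'a='a] by simp
  have "qbinom (card (UNIV :: 'a set)) k k = 1" using gb_self[OF Q2, of k] unfolding gb_def qbinom_def .
  thus "of_nat (card {(A :: 'a mat, B).
             A \<in> carrier_mat k k \<and> B \<in> carrier_mat k (n - k) \<and>
             vec_space.rank k (reach_mat A B) = k})
       = (\<Prod>i\<in>{1..k}. (of_nat (card (UNIV :: 'a set)) ^ n - of_nat (card (UNIV :: 'a set)) ^ i :: rat))"
    using main_count[OF assms(2) order_refl, where 'a='a] by simp
qed


end
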